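(* Let $\epsilon\ge0$ and consider the eigenvalue problem $$L_0\Psi=\Phi,\qquad \Phi'+\frac{\epsilon}{1-x^2}\Phi=\mu\,\Psi',\qquad -1<x<1,$$ for $\Psi$ in the space $X$. If $0\le\epsilon<2$, the complete spectrum consists of simple isolated eigenvalues $\mu=\mu_n=-n(n+1)$, $n=0,1,2,\dots$. If $\epsilon\ge2$, the problem has no nonzero eigenvalues in $X$.
   Context: $L_0=\frac{d}{dx}\left[(1-x^2)\frac{d}{dx}\right]$. ${\cal H}_0([-1,1])$ is the space of functions with $\int_{-1}^{1}(1-x^2)|\Psi'(x)|^2dx<\infty$, and $X=\{\Psi\in{\cal H}_0([-1,1]):\ \lim_{x\to\pm1}(1-x^2)\Psi'(x)=0\}$. $\Psi$ is determined up to an additive constant (constants give the eigenvalue $\mu=0$). A number $\mu\in\mathbb{C}$ is an eigenvalue if there is a nonzero $\Psi\in X$ solving the system classically on $(-1,1)$ with $\Phi=L_0\Psi$. *)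

theory Defs
  imports "HOL-Analysis.Analysis"
begin

text \<open>Psi is complex valued on (-1,1); dPsi is its derivative on (-1,1).
  Membership in X: finite weighted Dirichlet integral and vanishing flux at both ends.\<close>
definition in_X :: "(real \<Rightarrow> complex) \<Rightarrow> bool" where
  "in_X dPsi \<longleftrightarrow>
     (\<lambda>x. (1 - x\<^sup>2) * (cmod (dPsi x))\<^sup>2) integrable_on {-1<..<1::real} \<and>
     ((\<lambda>x. complex_of_real (1 - x\<^sup>2) * dPsi x) \<longlongrightarrow> 0) (at_right (-1)) \<and>
     ((\<lambda>x. complex_of_real (1 - x\<^sup>2) * dPsi x) \<longlongrightarrow> 0) (at_left 1)"

definition solves :: "real \<Rightarrow> complex \<Rightarrow> (real \<Rightarrow> complex) \<Rightarrow> bool" where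
  "solves \<epsilon> \<mu> Psi \<longleftrightarrow>
     (\<exists>dPsi Phi dPhi.
        in_X dPsi \<and>
        (\<forall>x\<in>{-1<..<1::real}.
           (Psi has_vector_derivative dPsi x) (at x) \<and>
           ((\<lambda>t. complex_of_real (1 - t\<^sup>2) * dPsi t) has_vector_derivative Phi x) (at x) \<and>
           (Phi has_vector_derivative dPhi x) (at x) \<and>
           dPhi x + complex_of_real (\<epsilon> / (1 - x\<^sup>2)) * Phi x = \<mu> * dPsi x))"

text \<open>Psi is nonzero modulo additive constants.\<close>
definition nonconstant :: "(real \<Rightarrow> complex) \<Rightarrow> bool" where
  "nonconstant Psi \<longleftrightarrow> \<not> (\<exists>c. \<forall>x\<in>{-1<..<1::real}. Psi x = c)"

text \<open>Eigenvalue: by the paper's convention the constants give mu = 0; any other mu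
  is an eigenvalue iff it has an eigenfunction that is nonzero modulo constants.\<close>
definition eigenvalue :: "real \<Rightarrow> complex \<Rightarrow> bool" where
  "eigenvalue \<epsilon> \<mu> \<longleftrightarrow> \<mu> = 0 \<or> (\<exists>Psi. solves \<epsilon> \<mu> Psi \<and> nonconstant Psi)"

end

theory Submission
  imports Defs "HOL-Computational_Algebra.Polynomial"
begin

lemma cmp_norm:
  fixes f :: "real \<Rightarrow> complex"
  assumes ab: "a \<le> b"
    and df: "\<And>x. x\<in>{a..b} \<Longrightarrow> (f has_vector_derivative f' x) (at x)"
    and dg: "\<And>x. x\<in>{a..b} \<Longrightarrow> (g has_real_derivative g' x) (at x)"
    and le: "\<And>x. x\<in>{a..b} \<Longrightarrow> norm (f' x) \<le> g' x"
  shows "norm (f b - f a) \<le> g b - g a"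
proof -
  have If: "(f' has_integral (f b - f a)) {a..b}"
    by (rule fundamental_theorem_of_calculus[OF ab]) (use df has_vector_derivative_at_within in blast)
  have Ig: "(g' has_integral (g b - g a)) {a..b}"
    by (rule fundamental_theorem_of_calculus[OF ab])
       (use dg has_real_derivative_iff_has_vector_derivative has_vector_derivative_at_within in blast)
  have "norm (integral {a..b} f') \<le> integral {a..b} g'"
    by (rule integral_norm_bound_integral) (use If Ig le in auto)
  then show ?thesis using If Ig by (simp add: integral_unique)
qed

lemma cmp_real:
  fixes f :: "real \<Rightarrow> real"
  assumes ab: "a \<le> b"
    and df: "\<And>x. x\<in>{a..b} \<Longrightarrow> (f has_real_derivative f' x) (at x)"
    and dg: "\<And>x. x\<in>{a..b} \<Longrightarrow> (g has_real_derivative g' x) (at x)"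
    and le: "\<And>x. x\<in>{a..b} \<Longrightarrow> g' x \<le> f' x"
  shows "g b - g a \<le> f b - f a"
proof -
  have If: "(f' has_integral (f b - f a)) {a..b}"
    by (rule fundamental_theorem_of_calculus[OF ab])
       (use df has_real_derivative_iff_has_vector_derivative has_vector_derivative_at_within in blast)
  have Ig: "(g' has_integral (g b - g a)) {a..b}"
    by (rule fundamental_theorem_of_calculus[OF ab])
       (use dg has_real_derivative_iff_has_vector_derivative has_vector_derivative_at_within in blast)
  show ?thesis by (rule has_integral_le[OF Ig If]) (use le in auto)
qed


definition sol :: "real \<Rightarrow> complex \<Rightarrow> (real\<Rightarrow>complex) \<Rightarrow> (real\<Rightarrow>complex) \<Rightarrow> (real\<Rightarrow>complex) \<Rightarrow> bool" where
 "sol c \<mu> w w1 w2 \<longleftrightarrow> (\<forall>x\<in>{-1<..<1}. (w has_vector_derivative w1 x) (at x) \<and>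
     (w1 has_vector_derivative w2 x) (at x) \<and>
     of_real (1-x\<^sup>2) * w2 x + of_real (2*c) * w1 x = \<mu> * w x) \<and>
   (w \<longlongrightarrow> 0) (at_right (-1)) \<and> (w \<longlongrightarrow> 0) (at_left 1)"

definition pp :: "real \<Rightarrow> real \<Rightarrow> real" where
  "pp c x = exp (c * (ln (1+x) - ln (1-x)))"

definition ext0 :: "(real \<Rightarrow> complex) \<Rightarrow> real \<Rightarrow> complex" where
  "ext0 w x = (if x \<in> {-1<..<1} then w x else 0)"

lemma pp_pos: "pp c x > 0" by (simp add: pp_def)

lemma pp_deriv:
  assumes "x \<in> {-1<..<1}"
  shows "(pp c has_real_derivative (2*c*pp c x/(1-x\<^sup>2))) (at x)"
proof -
  have x: "1+x > 0" "1-x > 0" using assms by auto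
  have "(pp c has_real_derivative (pp c x * (c * (1/(1+x) - (-1)/(1-x))))) (at x)"
    unfolding pp_def using x
    by (auto intro!: derivative_eq_intros)
  moreover have "pp c x * (c * (1/(1+x) - (-1)/(1-x))) = 2*c*pp c x/(1-x\<^sup>2)"
    using x by (simp add: field_simps power2_eq_square)
  ultimately show ?thesis by simp
qed

lemma q_deriv:
  assumes s: "sol c \<mu> w w1 w2" and x: "x \<in> {-1<..<1}"
  shows "((\<lambda>t. of_real (pp c t) * w1 t) has_vector_derivative
           (\<mu> * of_real (pp c x/(1-x\<^sup>2)) * w x)) (at x)"
proof -
  have d1: "(w1 has_vector_derivative w2 x) (at x)"
   and eq: "of_real (1-x\<^sup>2) * w2 x + of_real (2*c) * w1 x = \<mu> * w x"
    using s x unfolding sol_def by auto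
  have dp: "((\<lambda>t. complex_of_real (pp c t)) has_vector_derivative
              of_real (2*c*pp c x/(1-x\<^sup>2))) (at x)"
    using pp_deriv[OF x] has_vector_derivative_of_real by blast
  have "((\<lambda>t. of_real (pp c t) * w1 t) has_vector_derivative
        (of_real (pp c x) * w2 x + of_real (2*c*pp c x/(1-x\<^sup>2)) * w1 x)) (at x)"
    using has_vector_derivative_mult[OF dp d1] by (simp add: algebra_simps)
  moreover have "of_real (pp c x) * w2 x + of_real (2*c*pp c x/(1-x\<^sup>2)) * w1 x
      = \<mu> * of_real (pp c x/(1-x\<^sup>2)) * w x"
  proof -
    have "x\<^sup>2 < 1" using x by (auto simp: abs_square_less_1)
    then have nz: "1 - x\<^sup>2 \<noteq> 0" by simp
    then have nzc: "1 - (complex_of_real x)\<^sup>2 \<noteq> 0"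
      by (metis of_real_1 of_real_diff of_real_power of_real_eq_0_iff)
    have "of_real (pp c x) * w2 x + of_real (2*c*pp c x/(1-x\<^sup>2)) * w1 x
        = of_real (pp c x/(1-x\<^sup>2)) * (of_real (1-x\<^sup>2) * w2 x + of_real (2*c) * w1 x)"
      using nz nzc by (simp add: field_simps)
    also have "\<dots> = \<mu> * of_real (pp c x/(1-x\<^sup>2)) * w x" using eq by simp
    finally show ?thesis .
  qed
  ultimately show ?thesis by simp
qed

lemma sol_cont:
  assumes s: "sol c \<mu> w w1 w2" and x: "x \<in> {-1<..<1}"
  shows "isCont w x"
  using s x unfolding sol_def
  by (meson has_vector_derivative_continuous)

lemma ext0_cont:
  assumes s: "sol c \<mu> w w1 w2"
  shows "continuous_on {-1..1} (ext0 w)"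
proof (rule continuous_on_eq_continuous_within[THEN iffD2], intro ballI)
  fix x :: real assume x: "x \<in> {-1..1}"
  consider "x = -1" | "x = 1" | "x \<in> {-1<..<1}" using x by fastforce
  then show "continuous (at x within {-1..1}) (ext0 w)"
  proof cases
    case 1
    have "(w \<longlongrightarrow> 0) (at_right (-1))" using s unfolding sol_def by auto
    then have "(ext0 w \<longlongrightarrow> 0) (at_right (-1))"
      apply (rule Lim_transform_eventually)
      unfolding ext0_def eventually_at_right_field
      by (rule exI[of _ 1]) auto
    then have "(ext0 w \<longlongrightarrow> 0) (at (-1) within {-1..1})"
      by (simp add: at_within_Icc_at_right)
    then show ?thesis using 1 by (simp add: continuous_within ext0_def)
  next
    case 2
    have "(w \<longlongrightarrow> 0) (at_left 1)" using s unfolding sol_def by auto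
    then have "(ext0 w \<longlongrightarrow> 0) (at_left 1)"
      apply (rule Lim_transform_eventually)
      unfolding ext0_def eventually_at_left_field
      by (rule exI[of _ "-1"]) auto
    then have "(ext0 w \<longlongrightarrow> 0) (at 1 within {-1..1})"
      by (simp add: at_within_Icc_at_left)
    then show ?thesis using 2 by (simp add: continuous_within ext0_def)
  next
    case 3
    have "isCont w x" by (rule sol_cont[OF s 3])
    then have "(w \<longlongrightarrow> ext0 w x) (at x)" using 3 by (simp add: isCont_def ext0_def)
    then have "(ext0 w \<longlongrightarrow> ext0 w x) (at x)"
      by (rule Lim_transform_within_open[of _ _ _ _ "{-1<..<1}"]) (use 3 in \<open>auto simp: ext0_def\<close>)
    then have "isCont (ext0 w) x" by (simp add: isCont_def)
    then show ?thesis using continuous_at_imp_continuous_at_within by blast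
  qed
qed

lemma sol_bound:
  assumes s: "sol c \<mu> w w1 w2"
  obtains B where "B \<ge> 0" "\<And>x. x \<in> {-1<..<1} \<Longrightarrow> norm (w x) \<le> B"
proof -
  have "compact (ext0 w ` {-1..1})"
    by (rule compact_continuous_image[OF ext0_cont[OF s]]) simp
  then obtain B where B: "\<And>y. y \<in> ext0 w ` {-1..1} \<Longrightarrow> norm y \<le> B"
    using compact_imp_bounded bounded_iff by metis
  have "\<And>x. x \<in> {-1<..<1} \<Longrightarrow> norm (w x) \<le> B"
    using B[of "ext0 w _"] by (force simp: ext0_def)
  moreover have "B \<ge> 0" using B[of "ext0 w 0"] by (simp add: order_trans[OF norm_ge_zero])
  ultimately show ?thesis using that by blast
qed


lemma pp_mono:
  assumes "c \<ge> 0" "s \<in> {-1<..<1}" "t \<in> {-1<..<1}" "s \<le> t"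
  shows "pp c s \<le> pp c t"
proof -
  have "ln (1+s) \<le> ln (1+t)" "ln (1-t) \<le> ln (1-s)" using assms by auto
  then have "c * (ln (1+s) - ln (1-s)) \<le> c * (ln (1+t) - ln (1-t))"
    using assms(1) by (intro mult_left_mono) auto
  then show ?thesis unfolding pp_def by simp
qed

lemma pp_ge1: assumes "c \<ge> 0" "t \<in> {0..<1}" shows "pp c t \<ge> 1"
proof -
  have "ln (1-t) \<le> ln (1+t)" using assms by auto
  then show ?thesis using assms unfolding pp_def by simp
qed

lemma pp_le1: assumes "c \<ge> 0" "t \<in> {-1<..0}" shows "pp c t \<le> 1"
proof -
  have "ln (1+t) \<le> ln (1-t)" using assms by auto
  then have "c * (ln (1+t) - ln (1-t)) \<le> 0" using assms by (simp add: mult_nonneg_nonpos)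
  then show ?thesis unfolding pp_def by simp
qed

lemma pp_inv: assumes "t \<in> {-1<..<1}"
  shows "1 / pp c t = (1-t) powr c * (1+t) powr (-c)"
proof -
  have "(1-t) powr c * (1+t) powr (-c) = exp (c*ln(1-t)) * exp (-c * ln(1+t))"
    using assms by (simp add: powr_def)
  also have "\<dots> = exp (- (c * (ln (1+t) - ln (1-t))))"
    by (simp add: exp_add[symmetric] algebra_simps)
  also have "\<dots> = 1 / pp c t" by (simp add: pp_def exp_minus divide_inverse)
  finally show ?thesis by simp
qed

lemma w1_q: assumes "t \<in> {-1<..<1}"
  shows "of_real (1-t\<^sup>2) * w1 t = of_real ((1-t\<^sup>2) / pp c t) * (of_real (pp c t) * w1 t)"
proof -
  have "((1-t\<^sup>2) / pp c t) * pp c t = 1-t\<^sup>2" using pp_pos[of c t] by simp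
  then show ?thesis by (metis mult.assoc of_real_mult)
qed

lemma bdry_right:
  assumes s: "sol c \<mu> w w1 w2" and c: "c \<ge> 0"
  shows "((\<lambda>x. of_real (1-x\<^sup>2) * w1 x) \<longlongrightarrow> 0) (at_left 1)"
proof -
  obtain B where B0: "B \<ge> 0" and B: "\<And>x. x \<in> {-1<..<1} \<Longrightarrow> norm (w x) \<le> B"
    using sol_bound[OF s] by blast
  define K where "K = norm \<mu> * B"
  have K0: "K \<ge> 0" using B0 by (simp add: K_def)
  define q where "q t = of_real (pp c t) * w1 t" for t
  have bnd: "norm (q t) \<le> norm (q 0) + 2 * K * pp c t / sqrt (1-t)" if t: "t \<in> {0..<1}" for t
  proof -
    define g where "g s = 2 * K * pp c t / sqrt (1-s)" for s
    have "norm (q t - q 0) \<le> g t - g 0"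
    proof (rule cmp_norm[of 0 t q "\<lambda>x. \<mu> * of_real (pp c x/(1-x\<^sup>2)) * w x" g
               "\<lambda>s. K * pp c t / ((1-s) * sqrt (1-s))"])
      show "0 \<le> t" using t by simp
      fix x assume x: "x \<in> {0..t}"
      then have x1: "x \<in> {-1<..<1}" using t by auto
      have x2: "x\<^sup>2 < 1" using x1 by (auto simp: abs_square_less_1)
      show "(q has_vector_derivative \<mu> * of_real (pp c x/(1-x\<^sup>2)) * w x) (at x)"
        unfolding q_def by (rule q_deriv[OF s x1])
      have "1 - x > 0" using x t by auto
      then show "(g has_real_derivative K * pp c t / ((1-x) * sqrt (1-x))) (at x)"
        unfolding g_def
        by (auto intro!: derivative_eq_intros simp: field_simps power2_eq_square
            real_sqrt_mult[symmetric] real_sqrt_divide)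
      have "norm (\<mu> * of_real (pp c x/(1-x\<^sup>2)) * w x) = norm \<mu> * (pp c x/(1-x\<^sup>2)) * norm (w x)"
      proof -
        have "x\<^sup>2 < 1" using x1 by (auto simp: abs_square_less_1)
        then have r0: "pp c x/(1-x\<^sup>2) \<ge> 0" using pp_pos[of c x] by simp
        show ?thesis by (simp only: norm_mult norm_of_real abs_of_nonneg[OF r0])
      qed
      also have "\<dots> \<le> norm \<mu> * (pp c t/(1-x)) * B"
      proof (intro mult_mono mult_left_mono)
        have "pp c x \<le> pp c t" using pp_mono[OF c x1, of t] x t by auto
        moreover have "1 - x \<le> 1 - x\<^sup>2"
        proof -
          have "x * x \<le> x * 1" using x t by (intro mult_left_mono) auto
          then show ?thesis by (simp add: power2_eq_square)
        qed
        moreover have "1 - x > 0" using x t by auto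
        ultimately show "pp c x/(1-x\<^sup>2) \<le> pp c t/(1-x)"
          using pp_pos[of c x] by (intro frac_le) auto
      qed (use B x1 x2 pp_pos[of c t] pp_pos[of c x] x t in auto)
      also have "\<dots> \<le> K * pp c t / ((1-x) * sqrt (1-x))"
      proof -
        have "sqrt (1-x) \<le> 1" using x t by auto
        moreover have "sqrt (1-x) > 0" using x t by auto
        ultimately have "pp c t/(1-x) \<le> pp c t / ((1-x) * sqrt (1-x))"
          using pp_pos[of c t] \<open>1 - x > 0\<close> by (intro divide_left_mono) (auto simp: mult_le_cancel_left1)
        then have "K * (pp c t/(1-x)) \<le> K * (pp c t / ((1-x) * sqrt (1-x)))"
          using K0 by (rule mult_left_mono)
        then show ?thesis by (simp add: K_def mult_ac)
      qed
      finally show "norm (\<mu> * of_real (pp c x/(1-x\<^sup>2)) * w x) \<le> K * pp c t / ((1-x) * sqrt (1-x))" .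
    qed
    moreover have "g 0 \<ge> 0" unfolding g_def using K0 pp_pos[of c t] by simp
    ultimately have "norm (q t - q 0) \<le> g t" by simp
    then show ?thesis unfolding g_def using norm_triangle_ineq2[of "q t" "q 0"] by simp
  qed
  define h where "h t = (1-t\<^sup>2) * norm (q 0) + 2 * K * (1+t) * sqrt (1-t)" for t
  have ev: "norm (of_real (1-t\<^sup>2) * w1 t) \<le> h t" if t: "0 < t \<and> t < 1" for t :: real
  proof -
    have t1: "t \<in> {-1<..<1}" "t \<in> {0..<1}" using t by auto
    have ps: "pp c t \<ge> 1" using pp_ge1[OF c t1(2)] .
    have n1: "1 - t\<^sup>2 \<ge> 0" using t by (simp add: abs_square_le_1)
    have r0: "(1-t\<^sup>2) / pp c t \<ge> 0" using n1 pp_pos[of c t] by simp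
    have "norm (of_real (1-t\<^sup>2) * w1 t) = ((1-t\<^sup>2) / pp c t) * norm (q t)"
      unfolding q_def w1_q[OF t1(1), of w1 c]
      by (simp only: norm_mult norm_of_real abs_of_nonneg[OF r0])
    also have "\<dots> \<le> ((1-t\<^sup>2) / pp c t) * (norm (q 0) + 2 * K * pp c t / sqrt (1-t))"
      using bnd[OF t1(2)] n1 pp_pos[of c t] by (intro mult_left_mono) auto
    also have "\<dots> = (1-t\<^sup>2) / pp c t * norm (q 0) + 2 * K * (1-t\<^sup>2) / sqrt (1-t)"
      using pp_pos[of c t] by (simp add: field_simps)
    also have "\<dots> \<le> h t"
    proof -
      have "(1-t\<^sup>2) / pp c t * norm (q 0) \<le> (1-t\<^sup>2) * norm (q 0)"
        using ps n1 by (intro mult_right_mono) (auto simp: divide_le_eq mult_le_cancel_left1)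
      moreover have "(1-t\<^sup>2) / sqrt (1-t) = (1+t) * sqrt (1-t)"
      proof -
        have "(1-t)/sqrt(1-t) = sqrt(1-t)" by (rule real_div_sqrt) (use t in simp)
        moreover have "1 - t\<^sup>2 = (1+t) * (1-t)" by (simp add: power2_eq_square algebra_simps)
        ultimately show ?thesis by (metis times_divide_eq_right)
      qed
      then have "2 * K * (1-t\<^sup>2) / sqrt (1-t) = 2 * K * (1+t) * sqrt (1-t)"
        by (metis times_divide_eq_right mult.assoc)
      ultimately show ?thesis unfolding h_def by linarith
    qed
    finally show "norm (of_real (1-t\<^sup>2) * w1 t) \<le> h t" .
  qed
  have "eventually (\<lambda>t. norm (of_real (1-t\<^sup>2) * w1 t) \<le> h t) (at_left (1::real))"
    unfolding eventually_at_left_field by (rule exI[of _ 0]) (use ev in auto)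
  moreover have "(h \<longlongrightarrow> 0) (at_left 1)"
  proof -
    have "(h \<longlongrightarrow> h 1) (at_left 1)"
      unfolding h_def by (intro tendsto_intros)
    then show ?thesis by (simp add: h_def)
  qed
  ultimately show ?thesis by (rule Lim_null_comparison)
qed

lemma E_lim: assumes "e > 0"
  shows "((\<lambda>y::real. exp (e * ln (1+y))) \<longlongrightarrow> 0) (at_right (-1))"
proof -
  have "((\<lambda>y::real. (1+y) powr e) \<longlongrightarrow> 0) (at_right (-1))"
  proof (rule tendsto_zero_powrI)
    show "((\<lambda>y::real. 1+y) \<longlongrightarrow> 0) (at_right (-1))"
      by (rule tendsto_eq_intros) (auto intro!: tendsto_intros)
    show "\<forall>\<^sub>F x in at_right (-1). 0 \<le> 1 + (x::real)"
      unfolding eventually_at_right_field by (rule exI[of _ 0]) auto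
  qed (use assms in auto)
  then show ?thesis
    apply (rule Lim_transform_eventually)
    unfolding eventually_at_right_field by (rule exI[of _ 0]) (auto simp: powr_def)
qed

lemma bdry_left:
  assumes s: "sol c \<mu> w w1 w2" and c: "c \<ge> 0" "c < 1"
  shows "((\<lambda>x. of_real (1-x\<^sup>2) * w1 x) \<longlongrightarrow> 0) (at_right (-1))"
proof -
  obtain B where B0: "B \<ge> 0" and B: "\<And>x. x \<in> {-1<..<1} \<Longrightarrow> norm (w x) \<le> B"
    using sol_bound[OF s] by blast
  define K where "K = norm \<mu> * B"
  have K0: "K \<ge> 0" using B0 by (simp add: K_def)
  define a where "a = (1-c)/2"
  have a0: "a > 0" using c by (simp add: a_def)
  define E where "E e y = exp (e * ln (1+y))" for e y :: real
  define q where "q t = of_real (pp c t) * w1 t" for t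
  have bnd: "norm (q y) \<le> norm (q 0) + (K/a) * E (-a) y" if y: "y \<in> {-1<..0}" for y
  proof -
    define g where "g s = - (K/a) * E (-a) s" for s
    have "norm (q 0 - q y) \<le> g 0 - g y"
    proof (rule cmp_norm[of y 0 q "\<lambda>x. \<mu> * of_real (pp c x/(1-x\<^sup>2)) * w x" g
               "\<lambda>s. K * E (-a) s / (1+s)"])
      show "y \<le> 0" using y by simp
      fix x assume x: "x \<in> {y..0}"
      then have x1: "x \<in> {-1<..<1}" "x \<in> {-1<..0}" using y by auto
      have x2: "x\<^sup>2 < 1" using x1 by (auto simp: abs_square_less_1)
      show "(q has_vector_derivative \<mu> * of_real (pp c x/(1-x\<^sup>2)) * w x) (at x)"
        unfolding q_def by (rule q_deriv[OF s x1(1)])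
      have "1 + x > 0" using x1 by auto
      then have dE: "((\<lambda>s. E (-a) s) has_real_derivative E (-a) x * ((-a) * (1 / (1+x)))) (at x)"
        unfolding E_def by (auto intro!: derivative_eq_intros)
      have "(g has_real_derivative (- (K/a)) * (E (-a) x * ((-a) * (1 / (1+x))))) (at x)"
        unfolding g_def by (rule DERIV_cmult[OF dE])
      moreover have "(- (K/a)) * (E (-a) x * ((-a) * (1 / (1+x)))) = K * E (-a) x / (1+x)"
        using a0 by (simp add: field_simps)
      ultimately show "(g has_real_derivative K * E (-a) x / (1+x)) (at x)" by metis
      have r0: "pp c x/(1-x\<^sup>2) \<ge> 0" using x2 pp_pos[of c x] by simp
      have "norm (\<mu> * of_real (pp c x/(1-x\<^sup>2)) * w x) = norm \<mu> * (pp c x/(1-x\<^sup>2)) * norm (w x)"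
        by (simp only: norm_mult norm_of_real abs_of_nonneg[OF r0])
      also have "\<dots> \<le> norm \<mu> * (1/(1+x)) * B"
      proof (intro mult_mono mult_left_mono)
        have "pp c x \<le> 1" using pp_le1[OF c(1) x1(2)] .
        moreover have "1 + x \<le> 1 - x\<^sup>2"
        proof -
          have "x * x \<le> x * (-1)" using x1 by (intro mult_left_mono_neg) auto
          then show ?thesis by (simp add: power2_eq_square)
        qed
        ultimately show "pp c x/(1-x\<^sup>2) \<le> 1/(1+x)"
          using pp_pos[of c x] \<open>1+x>0\<close> by (intro frac_le) auto
      qed (use B x1 x2 r0 in auto)
      also have "\<dots> \<le> K * E (-a) x / (1+x)"
      proof -
        have "ln (1+x) \<le> 0" using x1 by auto
        then have "E (-a) x \<ge> 1" unfolding E_def using a0 by (simp add: mult_nonneg_nonpos)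
        then have "K * 1 \<le> K * E (-a) x" using K0 by (intro mult_left_mono) auto
        then show ?thesis using \<open>1+x>0\<close> by (simp add: K_def divide_right_mono)
      qed
      finally show "norm (\<mu> * of_real (pp c x/(1-x\<^sup>2)) * w x) \<le> K * E (-a) x / (1+x)" .
    qed
    moreover have "g 0 \<le> 0" unfolding g_def E_def using K0 a0 by simp
    ultimately have "norm (q 0 - q y) \<le> - g y" by simp
    then show ?thesis unfolding g_def using norm_triangle_ineq2[of "q y" "q 0"]
      by (simp add: norm_minus_commute)
  qed
  define C2 where "C2 = exp (c * ln 2)"
  define h where "h y = 2 * C2 * (norm (q 0) * E (1-c) y + (K/a) * E a y)" for y
  have ev: "norm (of_real (1-y\<^sup>2) * w1 y) \<le> h y" if y: "-1 < y \<and> y < 0" for y :: real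
  proof -
    have y1: "y \<in> {-1<..<1}" "y \<in> {-1<..0}" using y by auto
    have y2: "y\<^sup>2 < 1" using y1 by (auto simp: abs_square_less_1)
    have r0: "(1-y\<^sup>2) / pp c y \<ge> 0" using y2 pp_pos[of c y] by simp
    have eq: "(1-y\<^sup>2) / pp c y = (1-y) * E (1-c) y * exp (c * ln (1-y))"
    proof -
      have "(1-y\<^sup>2) / pp c y = (1-y) * (1+y) * exp (c * ln (1-y) - c * ln (1+y))"
        unfolding pp_def by (simp add: power2_eq_square algebra_simps exp_diff)
      also have "\<dots> = (1-y) * exp (ln (1+y)) * exp (c * ln (1-y) - c * ln (1+y))"
        using y by simp
      also have "\<dots> = (1-y) * E (1-c) y * exp (c * ln (1-y))"
        unfolding E_def by (simp add: exp_add[symmetric] exp_diff[symmetric] algebra_simps)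
      finally show ?thesis .
    qed
    have le1: "(1-y\<^sup>2) / pp c y \<le> 2 * C2 * E (1-c) y"
    proof -
      have "exp (c * ln (1-y)) \<le> C2" unfolding C2_def using y c by (auto intro!: mult_left_mono)
      moreover have "1 - y \<le> 2" using y by simp
      ultimately have "(1-y) * exp (c * ln (1-y)) \<le> 2 * C2"
        using y by (intro mult_mono) auto
      then have "((1-y) * exp (c * ln (1-y))) * E (1-c) y \<le> (2 * C2) * E (1-c) y"
        by (intro mult_right_mono) (auto simp: E_def)
      then show ?thesis unfolding eq by (simp add: mult_ac)
    qed
    have "norm (of_real (1-y\<^sup>2) * w1 y) = ((1-y\<^sup>2) / pp c y) * norm (q y)"
      unfolding q_def w1_q[OF y1(1), of w1 c]
      by (simp only: norm_mult norm_of_real abs_of_nonneg[OF r0])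
    also have "\<dots> \<le> (2 * C2 * E (1-c) y) * (norm (q 0) + (K/a) * E (-a) y)"
      using bnd[OF y1(2)] le1 r0 by (intro mult_mono) auto
    also have "\<dots> = h y"
    proof -
      have "E (1-c) y * E (-a) y = E a y" unfolding E_def a_def
        by (simp add: exp_add[symmetric] field_simps)
      then show ?thesis unfolding h_def by (simp add: algebra_simps)
    qed
    finally show ?thesis .
  qed
  have "eventually (\<lambda>y. norm (of_real (1-y\<^sup>2) * w1 y) \<le> h y) (at_right (-1::real))"
    unfolding eventually_at_right_field by (rule exI[of _ 0]) (use ev in auto)
  moreover have "(h \<longlongrightarrow> 0) (at_right (-1))"
  proof -
    have "((\<lambda>y. E (1-c) y) \<longlongrightarrow> 0) (at_right (-1))" "((\<lambda>y. E a y) \<longlongrightarrow> 0) (at_right (-1))"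
      unfolding E_def using E_lim c a0 by auto
    then have "(h \<longlongrightarrow> 2 * C2 * (norm (q 0) * 0 + (K/a) * 0)) (at_right (-1))"
      unfolding h_def by (intro tendsto_intros)
    then show ?thesis by simp
  qed
  ultimately show ?thesis by (rule Lim_null_comparison)
qed


lemma isCont_within: "isCont f a \<Longrightarrow> (f \<longlongrightarrow> f a) (at a within S)"
  by (auto simp: isCont_def intro: tendsto_within_subset)

lemma ibp:
  fixes \<phi> \<phi>1 \<phi>2 :: "real \<Rightarrow> real"
  assumes s: "sol c \<mu> w w1 w2" and c: "0 \<le> c" "c < 1"
    and d0: "\<And>x. (\<phi> has_real_derivative \<phi>1 x) (at x)"
    and d1: "\<And>x. (\<phi>1 has_real_derivative \<phi>2 x) (at x)"
    and c2: "continuous_on UNIV \<phi>2"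
  shows "integral {-1..1} (\<lambda>x. ext0 w x * (\<mu> * of_real (\<phi> x) -
     of_real (-2*\<phi> x - 4*x*\<phi>1 x + (1-x\<^sup>2)*\<phi>2 x - 2*c*\<phi>1 x))) = 0"
proof -
  define G where "G x = \<mu> * of_real (\<phi> x) - of_real (-2*\<phi> x - 4*x*\<phi>1 x + (1-x\<^sup>2)*\<phi>2 x - 2*c*\<phi>1 x)" for x
  define F where "F x = ext0 w x * G x" for x
  have cp0: "isCont \<phi> x" "isCont \<phi>1 x" for x using d0 d1 DERIV_isCont by blast+
  have contG: "continuous_on UNIV G"
    unfolding G_def using cp0 c2
    by (auto intro!: continuous_intros simp: continuous_on_eq_continuous_at)
  have contF: "continuous_on {-1..1} F"
    unfolding F_def using ext0_cont[OF s] contG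
    by (intro continuous_intros) (auto intro: continuous_on_subset)
  have intF: "F integrable_on {-1..1}" by (rule integrable_continuous_interval[OF contF])
  define Bd where "Bd x = of_real (1-x\<^sup>2) * w1 x * of_real (\<phi> x)
      - w x * of_real (-2*x*\<phi> x + (1-x\<^sup>2)*\<phi>1 x) + of_real (2*c) * w x * of_real (\<phi> x)" for x
  have dB: "(Bd has_vector_derivative F x) (at x)" if x: "x \<in> {-1<..<1}" for x
  proof -
    have dw: "(w has_vector_derivative w1 x) (at x)" and dw1: "(w1 has_vector_derivative w2 x) (at x)"
      and eq: "of_real (1-x\<^sup>2) * w2 x + of_real (2*c) * w1 x = \<mu> * w x"
      using s x unfolding sol_def by auto
    have r1: "((\<lambda>t. complex_of_real (1-t\<^sup>2)) has_vector_derivative of_real (-2*x)) (at x)"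
      by (rule has_vector_derivative_of_real) (auto intro!: derivative_eq_intros)
    have r2: "((\<lambda>t. complex_of_real (\<phi> t)) has_vector_derivative of_real (\<phi>1 x)) (at x)"
      by (rule has_vector_derivative_of_real[OF d0])
    have r3: "((\<lambda>t. complex_of_real (-2*t*\<phi> t + (1-t\<^sup>2)*\<phi>1 t)) has_vector_derivative
         of_real (-2*\<phi> x - 2*x*\<phi>1 x + (-2*x)*\<phi>1 x + (1-x\<^sup>2)*\<phi>2 x)) (at x)"
      by (rule has_vector_derivative_of_real) (auto intro!: derivative_eq_intros d0 d1)
    note t1 = has_vector_derivative_mult[OF has_vector_derivative_mult[OF r1 dw1] r2]
    note t2 = has_vector_derivative_mult[OF dw r3]
    note t3 = has_vector_derivative_mult[OF has_vector_derivative_mult[OF has_vector_derivative_const dw] r2, of "of_real (2*c)"]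
    note t = has_vector_derivative_add[OF has_vector_derivative_diff[OF t1 t2] t3]
    have eqv: "(of_real (1 - x\<^sup>2) * w1 x * of_real (\<phi>1 x) + (of_real (1 - x\<^sup>2) * w2 x + of_real (- 2 * x) * w1 x) * of_real (\<phi> x) -
         (w x * of_real (- 2 * \<phi> x - 2 * x * \<phi>1 x + - 2 * x * \<phi>1 x + (1 - x\<^sup>2) * \<phi>2 x) +
          w1 x * of_real (- 2 * x * \<phi> x + (1 - x\<^sup>2) * \<phi>1 x)) +
         (of_real (2 * c) * w x * of_real (\<phi>1 x) + (of_real (2 * c) * w1 x + 0 * w x) * of_real (\<phi> x))) = F x"
    proof -
      have "F x = (of_real (1-x\<^sup>2) * w2 x + of_real (2*c) * w1 x) * of_real (\<phi> x)
          - w x * of_real (-2*\<phi> x - 4*x*\<phi>1 x + (1-x\<^sup>2)*\<phi>2 x - 2*c*\<phi>1 x)"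
        unfolding F_def G_def eq ext0_def using x by (simp add: algebra_simps)
      then show ?thesis by (simp add: algebra_simps)
    qed
    show ?thesis using t unfolding eqv Bd_def[abs_def] .
  qed
  have pl: "((\<lambda>x. complex_of_real (\<phi> x)) \<longlongrightarrow> of_real (\<phi> a)) (at a within S)"
    "((\<lambda>x. complex_of_real (-2*x*\<phi> x + (1-x\<^sup>2)*\<phi>1 x)) \<longlongrightarrow> of_real (-2*a*\<phi> a + (1-a\<^sup>2)*\<phi>1 a)) (at a within S)"
    for a S
    using cp0 by (auto intro!: tendsto_intros isCont_within)
  have wr: "(w \<longlongrightarrow> 0) (at_left 1)" and wl: "(w \<longlongrightarrow> 0) (at_right (-1))" using s by (auto simp: sol_def)
  have Br: "(Bd \<longlongrightarrow> 0) (at_left 1)"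
  proof -
    have "(Bd \<longlongrightarrow> 0 * of_real (\<phi> 1) - 0 * of_real (-2*1*\<phi> 1 + (1-1\<^sup>2)*\<phi>1 1) + of_real (2*c) * 0 * of_real (\<phi> 1)) (at_left 1)"
      unfolding Bd_def
      by (intro tendsto_intros tendsto_mult[OF bdry_right[OF s c(1)]] pl wr)
    then show ?thesis by simp
  qed
  have Bl: "(Bd \<longlongrightarrow> 0) (at_right (-1))"
  proof -
    have "(Bd \<longlongrightarrow> 0 * of_real (\<phi> (-1)) - 0 * of_real (-2*(-1)*\<phi> (-1) + (1-(-1)\<^sup>2)*\<phi>1 (-1)) + of_real (2*c) * 0 * of_real (\<phi> (-1))) (at_right (-1))"
      unfolding Bd_def
      by (intro tendsto_intros tendsto_mult[OF bdry_left[OF s c]] pl wl)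
    then show ?thesis by simp
  qed
  have E1: "integral {0..b} F = Bd b - Bd 0" if b: "b \<in> {0<..<1}" for b
  proof -
    have "(F has_integral (Bd b - Bd 0)) {0..b}"
      by (rule fundamental_theorem_of_calculus) (use b in \<open>auto intro!: has_vector_derivative_at_within dB\<close>)
    then show ?thesis by (rule integral_unique)
  qed
  have E2: "integral {a..0} F = Bd 0 - Bd a" if a: "a \<in> {-1<..<0}" for a
  proof -
    have "(F has_integral (Bd 0 - Bd a)) {a..0}"
      by (rule fundamental_theorem_of_calculus) (use a in \<open>auto intro!: has_vector_derivative_at_within dB\<close>)
    then show ?thesis by (rule integral_unique)
  qed
  have int01: "F integrable_on {0..1}" and int10: "F integrable_on {-1..0}"
    using integrable_on_subinterval[OF intF] by auto
  have I1: "((\<lambda>b. integral {0..b} F) \<longlongrightarrow> integral {0..1} F) (at_left 1)"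
    using continuous_on_Icc_at_leftD[OF indefinite_integral_continuous_1[OF int01]] by simp
  have I1': "((\<lambda>b. integral {0..b} F) \<longlongrightarrow> 0 - Bd 0) (at_left 1)"
  proof -
    have "((\<lambda>b. Bd b - Bd 0) \<longlongrightarrow> 0 - Bd 0) (at_left 1)" by (intro tendsto_intros Br)
    then show ?thesis
      apply (rule Lim_transform_eventually)
      unfolding eventually_at_left_field by (rule exI[of _ 0]) (use E1 in auto)
  qed
  have v1: "integral {0..1} F = - Bd 0"
    using tendsto_unique[OF _ I1 I1'] by (simp add: trivial_limit_at_left_real)
  have I2: "((\<lambda>a. integral {a..0} F) \<longlongrightarrow> integral {-1..0} F) (at_right (-1))"
    using continuous_on_Icc_at_rightD[OF indefinite_integral_continuous_1'[OF int10]] by simp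
  have I2': "((\<lambda>a. integral {a..0} F) \<longlongrightarrow> Bd 0 - 0) (at_right (-1))"
  proof -
    have "((\<lambda>a. Bd 0 - Bd a) \<longlongrightarrow> Bd 0 - 0) (at_right (-1))" by (intro tendsto_intros Bl)
    then show ?thesis
      apply (rule Lim_transform_eventually)
      unfolding eventually_at_right_field by (rule exI[of _ 0]) (use E2 in auto)
  qed
  have v2: "integral {-1..0} F = Bd 0"
    using tendsto_unique[OF _ I2 I2'] by (simp add: trivial_limit_at_right_real)
  have "integral {-1..0} F + integral {0..1} F = integral {-1..1} F"
    by (rule Henstock_Kurzweil_Integration.integral_combine[OF _ _ intF]) auto
  then have "integral {-1..1} F = 0" using v1 v2 by simp
  then show ?thesis unfolding F_def G_def .
qed


definition mom :: "(real \<Rightarrow> complex) \<Rightarrow> nat \<Rightarrow> complex" where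
  "mom W j = integral {-1..1} (\<lambda>x. W x * of_real (x^j))"

lemma int_poly_zero:
  assumes cW: "continuous_on {-1..1} W" and m: "\<forall>j. mom W j = 0"
  shows "integral {-1..1} (\<lambda>x. W x * of_real (\<Sum>i\<le>n. a i * x^i)) = 0"
proof -
  have ij: "(\<lambda>x. W x * of_real (x^j)) integrable_on {-1..1}" for j
    by (rule integrable_continuous_interval) (intro continuous_intros cW)
  have "integral {-1..1} (\<lambda>x. W x * of_real (\<Sum>i\<le>n. a i * x^i))
      = integral {-1..1} (\<lambda>x. \<Sum>i\<le>n. of_real (a i) * (W x * of_real (x^i)))"
    by (simp add: sum_distrib_left mult_ac)
  also have "\<dots> = (\<Sum>i\<le>n. integral {-1..1} (\<lambda>x. of_real (a i) * (W x * of_real (x^i))))"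
    by (rule Henstock_Kurzweil_Integration.integral_sum) (auto intro!: integrable_on_mult_right integrable_continuous_interval continuous_intros cW)
  also have "\<dots> = (\<Sum>i\<le>n. of_real (a i) * mom W i)"
    unfolding mom_def by (simp only: Henstock_Kurzweil_Integration.integral_mult_right)
  also have "\<dots> = 0" using m by simp
  finally show ?thesis .
qed

lemma moments_zero:
  assumes cW: "continuous_on {-1..1} W" and m: "\<forall>j. mom W j = 0"
  shows "\<forall>x\<in>{-1..1}. W x = 0"
proof -
  define N where "N x = (cmod (W x))\<^sup>2" for x
  have cN: "continuous_on {-1..1} N" unfolding N_def by (intro continuous_intros cW)
  obtain B where B: "\<And>x. x \<in> {-1..1} \<Longrightarrow> norm (W x) \<le> B"
    using compact_imp_bounded[OF compact_continuous_image[OF cW compact_Icc]]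
    unfolding bounded_iff by force
  have B0: "B \<ge> 0" using B[of 0] by (simp add: order_trans[OF norm_ge_zero])
  have intWc: "(\<lambda>x. W x * cnj (W x)) integrable_on {-1..1}"
    by (rule integrable_continuous_interval) (intro continuous_intros cW)
  have WN: "W x * cnj (W x) = of_real (N x)" for x
    unfolding N_def by (rule complex_norm_square[symmetric])
  have small: "norm (integral {-1..1} (\<lambda>x. W x * cnj (W x))) \<le> 2 * B * e" if e: "e > 0" for e
  proof -
    have cc: "continuous_on {-1..1} (\<lambda>x. cnj (W x))" by (intro continuous_intros cW)
    obtain g where pg: "polynomial_function g" and g: "\<forall>x\<in>{-1..1}. norm (cnj (W x) - g x) < e"
      using Stone_Weierstrass_polynomial_function[OF compact_Icc cc e] by blast
    have "real_polynomial_function (Re \<circ> g)" "real_polynomial_function (Im \<circ> g)"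
      using pg bounded_linear_Re bounded_linear_Im unfolding polynomial_function_def by auto
    then obtain a1 n1 a2 n2 where g1: "(\<lambda>x. Re (g x)) = (\<lambda>x. \<Sum>i\<le>n1. a1 i * x^i)"
      and g2: "(\<lambda>x. Im (g x)) = (\<lambda>x. \<Sum>i\<le>n2. a2 i * x^i)"
      unfolding real_polynomial_function_iff_sum o_def by metis
    have gsplit: "g x = of_real (\<Sum>i\<le>n1. a1 i * x^i) + \<i> * of_real (\<Sum>i\<le>n2. a2 i * x^i)" for x
      using fun_cong[OF g1, of x] fun_cong[OF g2, of x] complex_eq[of "g x"] by simp
    have cg: "continuous_on {-1..1} g"
      using continuous_on_polymonial_function[OF pg] .
    have ig1: "(\<lambda>x. W x * of_real (\<Sum>i\<le>n1. a1 i * x^i)) integrable_on {-1..1}"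
      and ig2: "(\<lambda>x. W x * of_real (\<Sum>i\<le>n2. a2 i * x^i)) integrable_on {-1..1}"
      by (rule integrable_continuous_interval, intro continuous_intros cW)+
    have Wg: "integral {-1..1} (\<lambda>x. W x * g x) = 0"
    proof -
      have "integral {-1..1} (\<lambda>x. W x * g x) = integral {-1..1} (\<lambda>x. W x * of_real (\<Sum>i\<le>n1. a1 i * x^i) + \<i> * (W x * of_real (\<Sum>i\<le>n2. a2 i * x^i)))"
        unfolding gsplit by (simp add: algebra_simps)
      also have "\<dots> = integral {-1..1} (\<lambda>x. W x * of_real (\<Sum>i\<le>n1. a1 i * x^i)) + \<i> * integral {-1..1} (\<lambda>x. W x * of_real (\<Sum>i\<le>n2. a2 i * x^i))"
        using integral_add[OF ig1 integrable_on_mult_right[OF ig2, of "\<i>"]]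
          Henstock_Kurzweil_Integration.integral_mult_right[of "{-1..1}" "\<i>" "\<lambda>x. W x * of_real (\<Sum>i\<le>n2. a2 i * x^i)"]
        by metis
      also have "\<dots> = 0" using int_poly_zero[OF cW m] by simp
      finally show ?thesis .
    qed
    have ig: "(\<lambda>x. W x * g x) integrable_on {-1..1}"
      by (rule integrable_continuous_interval) (intro continuous_intros cW cg)
    have intd: "(\<lambda>x. W x * (cnj (W x) - g x)) integrable_on {-1..1}"
      by (rule integrable_continuous_interval) (intro continuous_intros cW cg)
    have "integral {-1..1} (\<lambda>x. W x * cnj (W x)) = integral {-1..1} (\<lambda>x. W x * (cnj (W x) - g x) + W x * g x)"
      by (simp add: algebra_simps)
    also have "\<dots> = integral {-1..1} (\<lambda>x. W x * (cnj (W x) - g x))"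
      using integral_add[OF intd ig] Wg by simp
    finally have eq: "integral {-1..1} (\<lambda>x. W x * cnj (W x)) = integral {-1..1} (\<lambda>x. W x * (cnj (W x) - g x))" .
    have "norm (integral {-1..1} (\<lambda>x. W x * (cnj (W x) - g x))) \<le> integral {-1..1} (\<lambda>x::real. B * e)"
    proof (rule Henstock_Kurzweil_Integration.integral_norm_bound_integral[OF intd])
      show "(\<lambda>x::real. B * e) integrable_on {-1..1}" by (intro integrable_continuous_interval continuous_intros)
      fix x :: real assume x: "x \<in> {-1..1}"
      have "norm (W x * (cnj (W x) - g x)) = norm (W x) * norm (cnj (W x) - g x)" by (simp add: norm_mult)
      also have "\<dots> \<le> B * e"
      proof -
        have "norm (cnj (W x) - g x) \<le> e" using g x by (simp add: less_imp_le)
        then show ?thesis using B[OF x] B0 by (intro mult_mono) auto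
      qed
      finally show "norm (W x * (cnj (W x) - g x)) \<le> B * e" .
    qed
    then show ?thesis using eq by simp
  qed
  have iN: "N integrable_on {-1..1}" by (rule integrable_continuous_interval[OF cN])
  have "integral {-1..1} (\<lambda>x. W x * cnj (W x)) = of_real (integral {-1..1} N)"
    unfolding WN using integral_unique[OF has_integral_of_real[OF integrable_integral[OF iN]]] by simp
  then have "\<bar>integral {-1..1} N\<bar> \<le> 2 * B * e" if "e > 0" for e using small[OF that] by simp
  then have I0: "integral {-1..1} N = 0"
  proof -
    assume h: "\<And>e. e > 0 \<Longrightarrow> \<bar>integral {-1..1} N\<bar> \<le> 2 * B * e"
    show ?thesis
    proof (rule ccontr)
      assume ne: "integral {-1..1} N \<noteq> 0"
      define e where "e = \<bar>integral {-1..1} N\<bar> / (4 * (B + 1))"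
      have "e > 0" using ne B0 by (simp add: e_def)
      from h[OF this] have "\<bar>integral {-1..1} N\<bar> \<le> 2 * B * (\<bar>integral {-1..1} N\<bar> / (4 * (B + 1)))"
        by (simp add: e_def)
      moreover have "2 * B * (\<bar>integral {-1..1} N\<bar> / (4 * (B + 1))) < \<bar>integral {-1..1} N\<bar>"
      proof -
        have p: "\<bar>integral {-1..1} N\<bar> > 0" using ne by simp
        have "2 * B * (\<bar>integral {-1..1} N\<bar> / (4 * (B + 1))) = \<bar>integral {-1..1} N\<bar> * (2 * B / (4 * (B + 1)))"
          by simp
        moreover have "2 * B / (4 * (B + 1)) < 1" using B0 by (simp add: field_simps)
        ultimately show ?thesis using p by (metis mult.right_neutral mult_strict_left_mono)
      qed
      ultimately show False by simp
    qed
  qed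
  have "N x = 0" if x: "x \<in> {-1..1}" for x
  proof (rule has_integral_0_cbox_imp_0[of "-1" 1 N])
    show "continuous_on (cbox (-1) 1) N" using cN by simp
    show "(N has_integral 0) (cbox (-1) 1)" using integrable_integral[OF iN] I0 by simp
  qed (use x in \<open>auto simp: N_def\<close>)
  then show ?thesis by (simp add: N_def)
qed


lemma poly_id:
  fixes x c :: real
  shows "-2*x^j - 4*x*(real j * x^(j-1)) + (1-x\<^sup>2)*(real j*(real (j-1)*x^(j-1-1))) - 2*c*(real j*x^(j-1))
    = -(real ((j+1)*(j+2)))*x^j + real (j*(j-1)) * x^(j-2) - 2*c*real j * x^(j-1)"
proof (cases j)
  case 0 then show ?thesis by simp
next
  case (Suc k)
  then show ?thesis
    by (cases k) (simp_all add: algebra_simps power2_eq_square)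
qed

lemma lin_helper:
  fixes W \<mu> :: complex and K Dn Bn X Y Z :: real
  shows "W * (\<mu> * of_real X - of_real (-K*X + Dn*Y - Bn*Z))
     = (\<mu> + of_real K) * (W * of_real X) + of_real Bn * (W * of_real Z) - of_real Dn * (W * of_real Y)"
  by (simp add: algebra_simps)

lemma mom_rec:
  assumes s: "sol c \<mu> w w1 w2" and c: "0 \<le> c" "c < 1"
  shows "(\<mu> + of_nat ((j+1)*(j+2))) * mom (ext0 w) j + of_real (2*c*real j) * mom (ext0 w) (j-1)
           - of_nat (j*(j-1)) * mom (ext0 w) (j-2) = 0"
proof -
  have d0: "((\<lambda>x. x^j) has_real_derivative real j * x^(j-1)) (at x)" for x :: real
    using DERIV_pow[of j x] by simp
  have d1: "((\<lambda>x. real j * x^(j-1)) has_real_derivative real j * (real (j-1) * x^(j-1-1))) (at x)" for x :: real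
    using DERIV_cmult[OF DERIV_pow[of "j-1" x], of "real j"] by simp
  have c2: "continuous_on UNIV (\<lambda>x::real. real j * (real (j-1) * x^(j-1-1)))"
    by (intro continuous_intros)
  note I = ibp[OF s c d0 d1 c2]
  define W where "W = ext0 w"
  have cW: "continuous_on {-1..1} W" unfolding W_def by (rule ext0_cont[OF s])
  have ij: "(\<lambda>x. W x * of_real (x^i)) integrable_on {-1..1}" for i
    by (rule integrable_continuous_interval) (intro continuous_intros cW)
  define A where "A = \<mu> + of_real (real ((j+1)*(j+2)))"
  define Bc :: complex where "Bc = of_real (2*c*real j)"
  define D :: complex where "D = of_real (real (j*(j-1)))"
  have pt: "W x * (\<mu> * of_real (x^j) - of_real (-2*x^j - 4*x*(real j * x^(j-1))
       + (1-x\<^sup>2)*(real j*(real (j-1)*x^(j-1-1))) - 2*c*(real j*x^(j-1))))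
     = A * (W x * of_real (x^j)) + Bc * (W x * of_real (x^(j-1))) - D * (W x * of_real (x^(j-2)))"
    for x :: real
    unfolding poly_id A_def Bc_def D_def
    by (rule lin_helper)
  have "0 = integral {-1..1} (\<lambda>x. A * (W x * of_real (x^j)) + Bc * (W x * of_real (x^(j-1))) - D * (W x * of_real (x^(j-2))))"
    using I unfolding W_def[symmetric] pt by simp
  also have "\<dots> = A * mom W j + Bc * mom W (j-1) - D * mom W (j-2)"
  proof -
    have i1: "(\<lambda>x. A * (W x * of_real (x^j))) integrable_on {-1..1}"
      and i2: "(\<lambda>x. Bc * (W x * of_real (x^(j-1)))) integrable_on {-1..1}"
      and i3: "(\<lambda>x. D * (W x * of_real (x^(j-2)))) integrable_on {-1..1}"
      by (rule integrable_on_mult_right[OF ij])+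
    show ?thesis
      unfolding mom_def integral_diff[OF integrable_add[OF i1 i2] i3] integral_add[OF i1 i2]
        Henstock_Kurzweil_Integration.integral_mult_right ..
  qed
  finally show ?thesis unfolding A_def Bc_def D_def W_def by simp
qed

lemma main_zero:
  assumes s: "sol c \<mu> w w1 w2" and c: "0 \<le> c" "c < 1"
    and h: "\<forall>j. \<mu> + of_nat ((j+1)*(j+2)) = 0 \<longrightarrow> mom (ext0 w) j = 0"
  shows "\<forall>x\<in>{-1<..<1}. w x = 0"
proof -
  have m: "mom (ext0 w) j = 0" for j
  proof (induction j rule: less_induct)
    case (less j)
    show ?case
    proof (cases "\<mu> + of_nat ((j+1)*(j+2)) = 0")
      case True then show ?thesis using h by blast
    next
      case False
      have r: "(\<mu> + of_nat ((j+1)*(j+2))) * mom (ext0 w) j + of_real (2*c*real j) * mom (ext0 w) (j-1)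
           - of_nat (j*(j-1)) * mom (ext0 w) (j-2) = 0" by (rule mom_rec[OF s c])
      have z1: "of_real (2*c*real j) * mom (ext0 w) (j-1) = 0"
        using less[of "j-1"] by (cases j) auto
      have z2: "(of_nat (j*(j-1)) :: complex) * mom (ext0 w) (j-2) = 0"
      proof (cases "j \<ge> 2")
        case True then show ?thesis using less[of "j-2"] by auto
      next
        case False then have "j*(j-1) = 0" by (cases j) auto
        then show ?thesis by simp
      qed
      have "(\<mu> + of_nat ((j+1)*(j+2))) * mom (ext0 w) j = 0" using r unfolding z1 z2 by simp
      then show ?thesis using False by simp
    qed
  qed
  have "\<forall>x\<in>{-1..1}. ext0 w x = 0"
    by (rule moments_zero[OF ext0_cont[OF s]]) (use m in auto)
  then show ?thesis
  proof (intro ballI)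
    fix x :: real assume h: "\<forall>x\<in>{-1..1}. ext0 w x = 0" and x: "x \<in> {-1<..<1}"
    then have "ext0 w x = 0" by auto
    then show "w x = 0" using x by (simp add: ext0_def)
  qed
qed

lemma sol_lin:
  assumes s: "sol c \<mu> w w1 w2" and v: "sol c \<mu> v v1 v2"
  shows "sol c \<mu> (\<lambda>x. w x - a * v x) (\<lambda>x. w1 x - a * v1 x) (\<lambda>x. w2 x - a * v2 x)"
  unfolding sol_def
proof (intro conjI ballI)
  fix x :: real assume x: "x \<in> {-1<..<1}"
  have a: "(w has_vector_derivative w1 x) (at x)" "(w1 has_vector_derivative w2 x) (at x)"
      "of_real (1-x\<^sup>2) * w2 x + of_real (2*c) * w1 x = \<mu> * w x"
    using s x unfolding sol_def by auto
  have b: "(v has_vector_derivative v1 x) (at x)" "(v1 has_vector_derivative v2 x) (at x)"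
      "of_real (1-x\<^sup>2) * v2 x + of_real (2*c) * v1 x = \<mu> * v x"
    using v x unfolding sol_def by auto
  show "((\<lambda>x. w x - a * v x) has_vector_derivative w1 x - a * v1 x) (at x)"
    using has_vector_derivative_diff[OF a(1) has_vector_derivative_mult_right[OF b(1), of a]] by simp
  show "((\<lambda>x. w1 x - a * v1 x) has_vector_derivative w2 x - a * v2 x) (at x)"
    using has_vector_derivative_diff[OF a(2) has_vector_derivative_mult_right[OF b(2), of a]] by simp
  show "of_real (1-x\<^sup>2) * (w2 x - a * v2 x) + of_real (2*c) * (w1 x - a * v1 x) = \<mu> * (w x - a * v x)"
    using a(3) b(3) by algebra
next
  have "((\<lambda>x. w x - a * v x) \<longlongrightarrow> 0 - a * 0) (at_right (-1))"
    using s v unfolding sol_def by (intro tendsto_intros) auto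
  then show "((\<lambda>x. w x - a * v x) \<longlongrightarrow> 0) (at_right (-1))" by simp
  have "((\<lambda>x. w x - a * v x) \<longlongrightarrow> 0 - a * 0) (at_left 1)"
    using s v unfolding sol_def by (intro tendsto_intros) auto
  then show "((\<lambda>x. w x - a * v x) \<longlongrightarrow> 0) (at_left 1)" by simp
qed


lemma G_deriv:
  assumes x: "x \<in> {-1<..<1}" and c: "c > 0"
  shows "((\<lambda>s. pp c s/(2*c)) has_real_derivative pp c x/(1-x\<^sup>2)) (at x)"
proof -
  have "((\<lambda>s. pp c s/(2*c)) has_real_derivative (2*c*pp c x/(1-x\<^sup>2))/(2*c)) (at x)"
    using DERIV_cdivide[OF pp_deriv[OF x, of c], of "2*c"] .
  then show ?thesis using c by simp
qed

lemma qdiff: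
  assumes s: "sol c \<mu> w w1 w2" and c: "c > 0"
    and B: "\<forall>s\<in>{-1<..x}. norm (w s) \<le> B" and x: "x < 1"
    and yt: "-1 < y" "y \<le> t" "t \<le> x"
  shows "norm (of_real (pp c t) * w1 t - of_real (pp c y) * w1 y) \<le> norm \<mu> * B * (pp c t/(2*c) - pp c y/(2*c))"
proof -
  have "norm (of_real (pp c t) * w1 t - of_real (pp c y) * w1 y)
      \<le> norm \<mu> * B * (pp c t/(2*c)) - norm \<mu> * B * (pp c y/(2*c))"
  proof (rule cmp_norm[of y t "\<lambda>s. of_real (pp c s) * w1 s" "\<lambda>s. \<mu> * of_real (pp c s/(1-s\<^sup>2)) * w s"
        "\<lambda>s. norm \<mu> * B * (pp c s/(2*c))" "\<lambda>s. norm \<mu> * B * (pp c s/(1-s\<^sup>2))"])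
    show "y \<le> t" using yt by simp
    fix s assume sI: "s \<in> {y..t}"
    then have s1: "s \<in> {-1<..<1}" using yt x by auto
    have s2: "s\<^sup>2 < 1" using s1 by (auto simp: abs_square_less_1)
    show "((\<lambda>s. of_real (pp c s) * w1 s) has_vector_derivative \<mu> * of_real (pp c s/(1-s\<^sup>2)) * w s) (at s)"
      by (rule q_deriv[OF s s1])
    show "((\<lambda>s. norm \<mu> * B * (pp c s/(2*c))) has_real_derivative norm \<mu> * B * (pp c s/(1-s\<^sup>2))) (at s)"
      by (rule DERIV_cmult[OF G_deriv[OF s1 c]])
    have r0: "pp c s/(1-s\<^sup>2) \<ge> 0" using s2 pp_pos[of c s] by simp
    have "norm (\<mu> * of_real (pp c s/(1-s\<^sup>2)) * w s) = norm \<mu> * (pp c s/(1-s\<^sup>2)) * norm (w s)"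
      by (simp only: norm_mult norm_of_real abs_of_nonneg[OF r0])
    also have "\<dots> \<le> norm \<mu> * (pp c s/(1-s\<^sup>2)) * B"
      using B sI yt mult_nonneg_nonneg[OF norm_ge_zero[of \<mu>] r0] by (intro mult_left_mono) auto
    finally show "norm (\<mu> * of_real (pp c s/(1-s\<^sup>2)) * w s) \<le> norm \<mu> * B * (pp c s/(1-s\<^sup>2))"
      by (simp add: mult_ac)
  qed
  then show ?thesis by (simp add: right_diff_distrib)
qed

lemma inv_pp_ge:
  assumes c: "c \<ge> 1" and s: "s \<in> {-1<..0}"
  shows "1 / pp c s \<ge> 1/(1+s)"
proof -
  define L where "L = ln (1-s) - ln (1+s)"
  have L0: "L \<ge> 0" using s unfolding L_def by auto
  have "1 / pp c s = exp (-(c * (ln (1+s) - ln (1-s))))" by (simp add: pp_def exp_minus divide_inverse)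
  also have "\<dots> = exp (c * L)" by (simp add: L_def algebra_simps)
  finally have "1 / pp c s = exp (c * L)" .
  also have "\<dots> \<ge> exp L" using c L0 by (simp add: mult_le_cancel_right1 order_trans[OF _ mult_right_mono[OF c L0]])
  also have "exp L = (1-s)/(1+s)" unfolding L_def using s by (simp add: exp_diff)
  also have "(1-s)/(1+s) \<ge> 1/(1+s)" using s by (intro divide_right_mono) auto
  finally show ?thesis .
qed

lemma claimA_neg:
  assumes s: "sol c \<mu> w w1 w2" and c: "c \<ge> 1"
    and B: "\<forall>s\<in>{-1<..x}. norm (w s) \<le> B" and x: "x < 1" and B0: "B \<ge> 0"
    and t: "-1 < t" "t \<le> x" "t \<le> 0"
  shows "norm (of_real (pp c t) * w1 t) \<le> 4 * norm \<mu> * B * (pp c t/(2*c))"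
proof (rule ccontr)
  assume "\<not> ?thesis"
  then have big: "norm (of_real (pp c t) * w1 t) > 4 * norm \<mu> * B * (pp c t/(2*c))" by simp
  have c0: "c > 0" using c by simp
  define q where "q s = of_real (pp c s) * w1 s" for s
  define Q where "Q = q t"
  have G0: "pp c t/(2*c) \<ge> 0" using pp_pos[of c t] c0 by simp
  have Qpos: "norm Q > 0" using big G0 B0 unfolding Q_def q_def
    by (smt (verit) mult_nonneg_nonneg norm_ge_zero)
  have close: "norm (q y - Q) < norm Q / 4" if y: "-1 < y" "y \<le> t" for y
  proof -
    have "norm (Q - q y) \<le> norm \<mu> * B * (pp c t/(2*c) - pp c y/(2*c))"
      unfolding Q_def q_def using qdiff[OF s c0 B x y(1) y(2) t(2)] .
    also have "\<dots> \<le> norm \<mu> * B * (pp c t/(2*c))"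
      using pp_pos[of c y] c0 B0 by (intro mult_left_mono) auto
    also have "\<dots> < norm Q / 4" using big unfolding Q_def q_def by simp
    finally show ?thesis by (simp add: norm_minus_commute)
  qed
  define \<kappa> where "\<kappa> = 3/4 * (norm Q)\<^sup>2"
  have k0: "\<kappa> > 0" using Qpos unfolding \<kappa>_def by simp
  define f where "f s = Re (cnj Q * w s)" for s
  have fbound: "\<bar>f s\<bar> \<le> norm Q * B" if "s \<in> {-1<..x}" for s
  proof -
    have "\<bar>f s\<bar> \<le> norm (cnj Q * w s)" unfolding f_def by (rule abs_Re_le_cmod)
    also have "\<dots> \<le> norm Q * B" using B that by (simp add: norm_mult mult_left_mono)
    finally show ?thesis .
  qed
  have grow: "\<kappa> * (ln (1+t) - ln (1+y)) \<le> f t - f y" if y: "-1 < y" "y \<le> t" for y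
  proof -
    have "(\<kappa> * ln (1+t)) - (\<kappa> * ln (1+y)) \<le> f t - f y"
    proof (rule cmp_real[of y t f "\<lambda>s. Re (cnj Q * w1 s)" "\<lambda>s. \<kappa> * ln (1+s)" "\<lambda>s. \<kappa> / (1+s)"])
      show "y \<le> t" using y by simp
      fix s assume sI: "s \<in> {y..t}"
      then have s1: "s \<in> {-1<..<1}" "s \<in> {-1<..0}" using y t x by auto
      have dw: "(w has_vector_derivative w1 s) (at s)" using s s1 unfolding sol_def by auto
      show "(f has_real_derivative Re (cnj Q * w1 s)) (at s)"
        unfolding f_def by (rule has_field_derivative_Re[OF has_vector_derivative_mult_right[OF dw]])
      show "((\<lambda>s. \<kappa> * ln (1+s)) has_real_derivative \<kappa> / (1+s)) (at s)"
        using s1 by (auto intro!: derivative_eq_intros)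
      have w1q: "w1 s = of_real (1 / pp c s) * q s"
        unfolding q_def using pp_pos[of c s] by (simp add: field_simps)
      have "Re (cnj Q * q s) \<ge> \<kappa>"
      proof -
        have "Re (cnj Q * q s) = Re (cnj Q * Q) + Re (cnj Q * (q s - Q))" by (simp add: algebra_simps)
        also have "Re (cnj Q * Q) = (norm Q)\<^sup>2" by (simp add: complex_norm_square[symmetric] mult.commute)
        also have "Re (cnj Q * (q s - Q)) \<ge> - (norm Q * (norm Q / 4))"
        proof -
          have "\<bar>Re (cnj Q * (q s - Q))\<bar> \<le> norm (cnj Q * (q s - Q))" by (rule abs_Re_le_cmod)
          also have "\<dots> = norm Q * norm (q s - Q)" by (simp add: norm_mult)
          also have "\<dots> \<le> norm Q * (norm Q / 4)"
            using close[of s] sI y by (intro mult_left_mono) auto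
          finally show ?thesis by linarith
        qed
        ultimately show ?thesis unfolding \<kappa>_def by (simp add: power2_eq_square)
      qed
      then have "Re (cnj Q * w1 s) \<ge> \<kappa> / pp c s"
        unfolding w1q using pp_pos[of c s] by (simp add: divide_right_mono)
      moreover have "\<kappa> / pp c s \<ge> \<kappa> / (1+s)"
        using inv_pp_ge[OF c s1(2)] k0 mult_left_mono[of "1/(1+s)" "1/pp c s" \<kappa>] by simp
      ultimately show "\<kappa> / (1+s) \<le> Re (cnj Q * w1 s)" by simp
    qed
    then show ?thesis by (simp add: right_diff_distrib)
  qed
  define M where "M = 2 * norm Q * B / \<kappa> + 1"
  define y where "y = (1+t) * exp (-M) - 1"
  have y1: "-1 < y" using t unfolding y_def by simp
  have y2: "y \<le> t"
  proof -
    have "2 * norm Q * B / \<kappa> \<ge> 0" using k0 B0 by simp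
    then have "exp (-M) \<le> 1" unfolding M_def by simp
    then have "(1+t) * exp (-M) \<le> (1+t) * 1" using t by (intro mult_left_mono) auto
    then show ?thesis unfolding y_def by simp
  qed
  have "ln (1+y) = ln (1+t) - M" unfolding y_def using t by (simp add: ln_mult)
  then have "\<kappa> * M \<le> f t - f y" using grow[OF y1 y2] by simp
  also have "\<dots> \<le> 2 * norm Q * B"
    using fbound[of t] fbound[of y] t y1 y2 by auto
  finally have "\<kappa> * M \<le> 2 * norm Q * B" .
  moreover have "\<kappa> * M = 2 * norm Q * B + \<kappa>" unfolding M_def using k0 by (simp add: field_simps)
  ultimately show False using k0 by simp
qed

lemma claimA:
  assumes s: "sol c \<mu> w w1 w2" and c: "c \<ge> 1"
    and B: "\<forall>s\<in>{-1<..x}. norm (w s) \<le> B" and x: "x < 1" and B0: "B \<ge> 0"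
    and t: "-1 < t" "t \<le> x"
  shows "norm (of_real (pp c t) * w1 t) \<le> 4 * norm \<mu> * B * (pp c t/(2*c))"
proof (cases "t \<le> 0")
  case True then show ?thesis using claimA_neg[OF s c B x B0 t] by simp
next
  case False
  have c0: "c > 0" using c by simp
  have a0: "norm (of_real (pp c 0) * w1 0) \<le> 4 * norm \<mu> * B * (pp c 0/(2*c))"
    using claimA_neg[OF s c B x B0, of 0] False t by simp
  have d: "norm (of_real (pp c t) * w1 t - of_real (pp c 0) * w1 0) \<le> norm \<mu> * B * (pp c t/(2*c) - pp c 0/(2*c))"
    using qdiff[OF s c0 B x, of 0 t] False t by simp
  have mono: "pp c 0 \<le> pp c t" using pp_mono[of c 0 t] c False t x by simp
  have "norm (of_real (pp c t) * w1 t) \<le> norm (of_real (pp c 0) * w1 0) + norm \<mu> * B * (pp c t/(2*c) - pp c 0/(2*c))"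
    using d norm_triangle_ineq2[of "of_real (pp c t) * w1 t" "of_real (pp c 0) * w1 0"] by simp
  also have "\<dots> \<le> 4 * norm \<mu> * B * (pp c 0/(2*c)) + norm \<mu> * B * (pp c t/(2*c) - pp c 0/(2*c))"
    using a0 by simp
  also have "\<dots> \<le> 4 * norm \<mu> * B * (pp c t/(2*c))"
  proof -
    have "pp c 0/(2*c) \<le> pp c t/(2*c)" using mono c0 by (simp add: divide_right_mono)
    moreover have "norm \<mu> * B \<ge> 0" using B0 by simp
    ultimately have "norm \<mu> * B * (pp c 0/(2*c)) \<le> norm \<mu> * B * (pp c t/(2*c))"
      by (intro mult_left_mono)
    then show ?thesis by (simp add: algebra_simps)
  qed
  finally show ?thesis .
qed

lemma halving:
  assumes s: "sol c \<mu> w w1 w2" and c: "c \<ge> 1"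
    and Kc: "Kc = 2 * norm \<mu> / c + 1" and B0: "B \<ge> 0"
    and Bd: "\<forall>s\<in>{-1<..<1}. norm (w s) \<le> B * exp (2*Kc* s)"
    and t: "t \<in> {-1<..<1}"
  shows "norm (w t) \<le> (B/2) * exp (2*Kc*t)"
proof -
  have c0: "c > 0" using c by simp
  have K0: "Kc > 0" using Kc c0 by (simp add: add_nonneg_pos)
  have w1b: "norm (w1 r) \<le> Kc * B * exp (2*Kc*r)" if r: "r \<in> {-1<..<1}" for r
  proof -
    have Br: "\<forall>s\<in>{-1<..r}. norm (w s) \<le> B * exp (2*Kc*r)"
    proof
      fix s assume sI: "s \<in> {-1<..r}"
      then have "norm (w s) \<le> B * exp (2*Kc* s)" using Bd r by auto
      also have "\<dots> \<le> B * exp (2*Kc*r)" using sI K0 B0 by (intro mult_left_mono) auto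
      finally show "norm (w s) \<le> B * exp (2*Kc*r)" .
    qed
    have qa: "norm (of_real (pp c r) * w1 r) \<le> 4 * norm \<mu> * (B * exp (2*Kc*r)) * (pp c r/(2*c))"
      by (rule claimA[OF s c Br]) (use r B0 in auto)
    have "norm (w1 r) = norm (of_real (pp c r) * w1 r) / pp c r"
      using pp_pos[of c r] by (simp add: norm_mult)
    also have "\<dots> \<le> 4 * norm \<mu> * (B * exp (2*Kc*r)) * (pp c r/(2*c)) / pp c r"
      by (rule divide_right_mono[OF qa]) (use pp_pos[of c r] in simp)
    also have "\<dots> = (2 * norm \<mu> / c) * (B * exp (2*Kc*r))"
      using pp_pos[of c r] c0 by (simp add: field_simps)
    also have "\<dots> \<le> Kc * (B * exp (2*Kc*r))"
      using Kc B0 by (intro mult_right_mono) auto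
    finally show ?thesis by (simp add: mult_ac)
  qed
  have diff: "norm (w t - w y) \<le> (B/2) * exp (2*Kc*t)" if y: "-1 < y" "y \<le> t" for y
  proof -
    have "norm (w t - w y) \<le> (B/2) * exp (2*Kc*t) - (B/2) * exp (2*Kc*y)"
    proof (rule cmp_norm[of y t w w1 "\<lambda>s. (B/2) * exp (2*Kc* s)" "\<lambda>s. Kc * B * exp (2*Kc* s)"])
      show "y \<le> t" using y by simp
      fix s assume sI: "s \<in> {y..t}"
      then have s1: "s \<in> {-1<..<1}" using y t by auto
      show "(w has_vector_derivative w1 s) (at s)" using s s1 unfolding sol_def by auto
      have "((\<lambda>s. (B/2) * exp (2*Kc* s)) has_real_derivative (B/2) * (exp (2*Kc* s) * (2*Kc))) (at s)"
        by (auto intro!: derivative_eq_intros)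
      then show "((\<lambda>s. (B/2) * exp (2*Kc* s)) has_real_derivative Kc * B * exp (2*Kc* s)) (at s)"
        by (simp add: algebra_simps)
      show "norm (w1 s) \<le> Kc * B * exp (2*Kc* s)" by (rule w1b[OF s1])
    qed
    also have "\<dots> \<le> (B/2) * exp (2*Kc*t)" using B0 by simp
    finally show ?thesis .
  qed
  have lim0: "((\<lambda>y. norm (w t - w y)) \<longlongrightarrow> norm (w t - 0)) (at_right (-1))"
    using s unfolding sol_def by (intro tendsto_intros) auto
  then have lim: "((\<lambda>y. norm (w t - w y)) \<longlongrightarrow> norm (w t)) (at_right (-1))" by simp
  show ?thesis
  proof (rule tendsto_upperbound[OF lim])
    show "\<forall>\<^sub>F y in at_right (- 1). norm (w t - w y) \<le> B / 2 * exp (2 * Kc * t)"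
      unfolding eventually_at_right_field by (rule exI[of _ t]) (use t diff in auto)
  qed (simp add: trivial_limit_at_right_real)
qed

lemma big_c_zero:
  assumes s: "sol c \<mu> w w1 w2" and c: "c \<ge> 1"
  shows "\<forall>x\<in>{-1<..<1}. w x = 0"
proof -
  define Kc where "Kc = 2 * norm \<mu> / c + 1"
  have K0: "Kc > 0" using c by (simp add: Kc_def add_nonneg_pos)
  obtain Bw where Bw0: "Bw \<ge> 0" and Bw: "\<And>x. x \<in> {-1<..<1} \<Longrightarrow> norm (w x) \<le> Bw"
    using sol_bound[OF s] by blast
  define B0 where "B0 = Bw * exp (2*Kc)"
  have B00: "B0 \<ge> 0" using Bw0 by (simp add: B0_def)
  have ind: "\<forall>s\<in>{-1<..<1}. norm (w s) \<le> (B0 / 2^n) * exp (2*Kc* s)" for n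
  proof (induction n)
    case 0
    show ?case
    proof
      fix s :: real assume sI: "s \<in> {-1<..<1}"
      have "1 \<le> exp (2*Kc*(s+1))" using sI K0 by simp
      then have "Bw \<le> Bw * exp (2*Kc*(s+1))" using Bw0 by (simp add: mult_le_cancel_left1)
      also have "\<dots> = B0 * exp (2*Kc* s)" unfolding B0_def by (simp add: exp_add[symmetric] algebra_simps)
      finally show "norm (w s) \<le> (B0 / 2^0) * exp (2*Kc* s)" using Bw[OF sI] by simp
    qed
  next
    case (Suc n)
    show ?case
    proof
      fix t :: real assume t: "t \<in> {-1<..<1}"
      have "norm (w t) \<le> ((B0/2^n)/2) * exp (2*Kc*t)"
        by (rule halving[OF s c Kc_def _ Suc.IH t]) (use B00 in simp)
      then show "norm (w t) \<le> (B0 / 2^Suc n) * exp (2*Kc*t)" by simp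
    qed
  qed
  show ?thesis
  proof (intro ballI, rule ccontr)
    fix s assume sI: "s \<in> {-1<..<1}" and ne: "w s \<noteq> 0"
    obtain n where n: "B0 * exp (2*Kc* s) / norm (w s) < 2^n"
      using real_arch_pow[of 2 "B0 * exp (2*Kc* s) / norm (w s)"] by auto
    have "norm (w s) \<le> (B0 / 2^n) * exp (2*Kc* s)" using ind[of n] sI by auto
    then have "norm (w s) * 2^n \<le> B0 * exp (2*Kc* s)" by (simp add: field_simps)
    moreover have "B0 * exp (2*Kc* s) < norm (w s) * 2^n" using n ne by (simp add: field_simps)
    ultimately show False by simp
  qed
qed


lemma solves_sol:
  assumes "solves \<epsilon> \<mu> Psi"
  obtains dPsi Phi dPhi where "sol (\<epsilon>/2) \<mu> (\<lambda>t. of_real (1-t\<^sup>2) * dPsi t) Phi dPhi"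
    "\<And>x. x \<in> {-1<..<1} \<Longrightarrow> (Psi has_vector_derivative dPsi x) (at x)"
proof -
  obtain dPsi Phi dPhi where X: "in_X dPsi" and
    H: "\<And>x. x\<in>{-1<..<1::real} \<Longrightarrow>
           (Psi has_vector_derivative dPsi x) (at x) \<and>
           ((\<lambda>t. complex_of_real (1 - t\<^sup>2) * dPsi t) has_vector_derivative Phi x) (at x) \<and>
           (Phi has_vector_derivative dPhi x) (at x) \<and>
           dPhi x + complex_of_real (\<epsilon> / (1 - x\<^sup>2)) * Phi x = \<mu> * dPsi x"
    using assms unfolding solves_def by blast
  have "sol (\<epsilon>/2) \<mu> (\<lambda>t. of_real (1-t\<^sup>2) * dPsi t) Phi dPhi"
    unfolding sol_def
  proof (intro conjI ballI)
    fix x :: real assume x: "x \<in> {-1<..<1}"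
    note h = H[OF x]
    show "((\<lambda>t. complex_of_real (1 - t\<^sup>2) * dPsi t) has_vector_derivative Phi x) (at x)"
      "(Phi has_vector_derivative dPhi x) (at x)" using h by auto
    have "x\<^sup>2 < 1" using x by (auto simp: abs_square_less_1)
    then have "1 - x\<^sup>2 \<noteq> 0" by simp
    then have nz: "complex_of_real (1 - x\<^sup>2) \<noteq> 0" by (simp only: of_real_eq_0_iff not_False_eq_True)
    have "complex_of_real (1 - x\<^sup>2) * (dPhi x + complex_of_real (\<epsilon> / (1 - x\<^sup>2)) * Phi x)
        = complex_of_real (1 - x\<^sup>2) * dPhi x + complex_of_real (2 * (\<epsilon> / 2)) * Phi x"
    proof -
      have E: "complex_of_real (1 - x\<^sup>2) * complex_of_real (\<epsilon> / (1 - x\<^sup>2)) = complex_of_real \<epsilon>"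
      proof -
        have "(1 - x\<^sup>2) * (\<epsilon> / (1 - x\<^sup>2)) = \<epsilon>" using \<open>x\<^sup>2 < 1\<close> by simp
        then show ?thesis by (metis of_real_mult)
      qed
      have "complex_of_real (1 - x\<^sup>2) * (dPhi x + complex_of_real (\<epsilon> / (1 - x\<^sup>2)) * Phi x)
         = complex_of_real (1 - x\<^sup>2) * dPhi x + (complex_of_real (1 - x\<^sup>2) * complex_of_real (\<epsilon> / (1 - x\<^sup>2))) * Phi x"
        by (simp only: distrib_left mult.assoc)
      also have "\<dots> = complex_of_real (1 - x\<^sup>2) * dPhi x + complex_of_real (2 * (\<epsilon> / 2)) * Phi x"
        unfolding E by simp
      finally show ?thesis .
    qed
    moreover have eq4: "dPhi x + complex_of_real (\<epsilon> / (1 - x\<^sup>2)) * Phi x = \<mu> * dPsi x" using h by blast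
    ultimately show "complex_of_real (1 - x\<^sup>2) * dPhi x + complex_of_real (2 * (\<epsilon> / 2)) * Phi x
        = \<mu> * (complex_of_real (1 - x\<^sup>2) * dPsi x)"
      by (metis mult.left_commute)
  next
    show "((\<lambda>t. complex_of_real (1 - t\<^sup>2) * dPsi t) \<longlongrightarrow> 0) (at_right (- 1))"
      "((\<lambda>t. complex_of_real (1 - t\<^sup>2) * dPsi t) \<longlongrightarrow> 0) (at_left 1)"
      using X unfolding in_X_def by auto
  qed
  then show ?thesis using that H by blast
qed

lemma const_of_deriv0:
  fixes f :: "real \<Rightarrow> complex"
  assumes "\<And>x. x \<in> {-1<..<1} \<Longrightarrow> (f has_vector_derivative 0) (at x)"
  shows "\<exists>c. \<forall>x\<in>{-1<..<1}. f x = c"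
proof (rule has_derivative_zero_constant)
  show "convex {-1<..<1::real}" by simp
  fix x :: real assume "x \<in> {-1<..<1}"
  then have "(f has_vector_derivative 0) (at x within {-1<..<1})"
    using assms has_vector_derivative_at_within by blast
  then show "(f has_derivative (\<lambda>h. 0)) (at x within {-1<..<1})"
    by (simp add: has_vector_derivative_def)
qed

lemma w_zero_const:
  assumes d: "\<And>x. x \<in> {-1<..<1} \<Longrightarrow> (Psi has_vector_derivative dPsi x) (at x)"
    and z: "\<forall>x\<in>{-1<..<1}. complex_of_real (1-x\<^sup>2) * dPsi x = 0"
  shows "\<not> nonconstant Psi"
proof -
  have "dPsi x = 0" if x: "x \<in> {-1<..<1}" for x
  proof -
    have "x\<^sup>2 < 1" using x by (auto simp: abs_square_less_1)
    then have "1 - x\<^sup>2 \<noteq> 0" by simp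
    then have "complex_of_real (1 - x\<^sup>2) \<noteq> 0" by (simp only: of_real_eq_0_iff not_False_eq_True)
    then show ?thesis using z x by auto
  qed
  then have "\<And>x. x \<in> {-1<..<1} \<Longrightarrow> (Psi has_vector_derivative 0) (at x)" using d by metis
  then show ?thesis using const_of_deriv0 unfolding nonconstant_def by blast
qed

lemma w_prop_const:
  assumes d: "\<And>x. x \<in> {-1<..<1} \<Longrightarrow> (Psi has_vector_derivative dPsi x) (at x)"
    and d0: "\<And>x. x \<in> {-1<..<1} \<Longrightarrow> (Psi0 has_vector_derivative dPsi0 x) (at x)"
    and z: "\<forall>x\<in>{-1<..<1}. complex_of_real (1-x\<^sup>2) * dPsi x - a * (complex_of_real (1-x\<^sup>2) * dPsi0 x) = 0"
  shows "\<exists>c. \<forall>x\<in>{-1<..<1}. Psi x = a * Psi0 x + c"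
proof -
  have "dPsi x - a * dPsi0 x = 0" if x: "x \<in> {-1<..<1}" for x
  proof -
    have "x\<^sup>2 < 1" using x by (auto simp: abs_square_less_1)
    then have "1 - x\<^sup>2 \<noteq> 0" by simp
    then have nz: "complex_of_real (1 - x\<^sup>2) \<noteq> 0" by (simp only: of_real_eq_0_iff not_False_eq_True)
    have "complex_of_real (1-x\<^sup>2) * (dPsi x - a * dPsi0 x) = 0" using z x by (simp add: algebra_simps)
    then show ?thesis using nz by simp
  qed
  then have "\<And>x. x \<in> {-1<..<1} \<Longrightarrow> ((\<lambda>x. Psi x - a * Psi0 x) has_vector_derivative 0) (at x)"
    using has_vector_derivative_diff[OF d has_vector_derivative_mult_right[OF d0]] by metis
  then obtain c where "\<forall>x\<in>{-1<..<1}. Psi x - a * Psi0 x = c" using const_of_deriv0 by blast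
  then show ?thesis by (metis add.commute diff_eq_eq)
qed


fun bb :: "real \<Rightarrow> nat \<Rightarrow> nat \<Rightarrow> real" where
  "bb c k 0 = 1"
| "bb c k (Suc 0) = 2*c*real k / (2*real k + 2)"
| "bb c k (Suc (Suc m)) = (2*c*real (k - Suc (Suc m) + 1) * bb c k (Suc m)
      - real ((k - Suc (Suc m) + 2)*(k - Suc (Suc m) + 1)) * bb c k m)
      / (real (k - (k - Suc (Suc m))) * real (k + (k - Suc (Suc m)) + 3))"

definition ac :: "real \<Rightarrow> nat \<Rightarrow> nat \<Rightarrow> real" where
  "ac c k j = (if j \<le> k then bb c k (k - j) else 0)"

lemma ac_rec:
  "real ((j+2)*(j+1)) * ac c k (j+2) - 2*c*real (j+1) * ac c k (j+1) + real (k-j) * real (k+j+3) * ac c k j = 0"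
proof -
  consider "k < j" | "j = k" | "j + 1 = k" | "j + 2 \<le> k" by linarith
  then show ?thesis
  proof cases
    case 1 then show ?thesis by (simp add: ac_def)
  next
    case 2 then show ?thesis by (simp add: ac_def)
  next
    case 3
    then have kk: "k = Suc j" by simp
    show ?thesis unfolding kk by (simp add: ac_def field_simps)
  next
    case 4
    define m where "m = k - j - 2"
    have km: "k - j = Suc (Suc m)" "k - (j+1) = Suc m" "k - (j+2) = m" "k - Suc (Suc m) = j"
      using 4 unfolding m_def by auto
    have nz: "real (k - (k - Suc (Suc m))) * real (k + (k - Suc (Suc m)) + 3) \<noteq> 0"
      using km 4 by simp
    have "ac c k j = bb c k (Suc (Suc m))" "ac c k (j+1) = bb c k (Suc m)" "ac c k (j+2) = bb c k m"
      using 4 km by (auto simp: ac_def)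
    moreover have "real (k - (k - Suc (Suc m))) * real (k + (k - Suc (Suc m)) + 3) * bb c k (Suc (Suc m))
        = 2*c*real (k - Suc (Suc m) + 1) * bb c k (Suc m)
          - real ((k - Suc (Suc m) + 2)*(k - Suc (Suc m) + 1)) * bb c k m"
      using nz by (simp only: bb.simps) (simp add: field_simps)
    ultimately show ?thesis using km by (simp add: algebra_simps)
  qed
qed

definition vp :: "real \<Rightarrow> nat \<Rightarrow> real poly" where
  "vp c k = Poly (map (ac c k) [0..<Suc k])"

lemma coeff_vp: "coeff (vp c k) j = ac c k j"
  by (cases "j < Suc k") (simp_all add: vp_def nth_default_def ac_def del: upt_Suc)

lemma vp_nz: "vp c k \<noteq> 0"
proof -
  have "coeff (vp c k) k = 1" by (simp add: coeff_vp ac_def)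
  then show ?thesis by auto
qed

lemma vp_ode:
  "(1 - x\<^sup>2) * poly (pderiv (pderiv (vp c k))) x - (2*c + 4*x) * poly (pderiv (vp c k)) x
     + real (k*(k+3)) * poly (vp c k) x = 0"
proof -
  define p where "p = vp c k"
  define Q where "Q = pderiv (pderiv p) - monom 1 2 * pderiv (pderiv p) - smult (2*c) (pderiv p)
      - monom 4 1 * pderiv p + smult (real (k*(k+3))) p"
  have "coeff Q j = 0" for j
  proof (cases "j \<le> k")
    case False
    then show ?thesis
      unfolding Q_def p_def coeff_diff coeff_add coeff_smult coeff_monom_mult coeff_pderiv coeff_vp
      by (simp add: ac_def)
  next
    case True
    have r: "real ((j+2)*(j+1)) * ac c k (j+2) - 2*c*real (j+1) * ac c k (j+1) + real (k-j) * real (k+j+3) * ac c k j = 0"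
      by (rule ac_rec)
    have kj: "real (k-j) * real (k+j+3) = real (k*(k+3)) - real j * real j - 3 * real j"
      using True by (simp add: of_nat_diff algebra_simps)
    consider "j = 0" | "j = 1" | i where "j = Suc (Suc i)" by (metis One_nat_def not0_implies_Suc)
    then show ?thesis
    proof cases
      case 1 then show ?thesis using r kj unfolding Q_def p_def coeff_diff coeff_add coeff_smult coeff_monom_mult coeff_pderiv coeff_vp
        by (simp add: algebra_simps)
    next
      case 2
      have k1: "real (k - Suc 0) = real k - 1" using True 2 by (simp add: of_nat_diff)
      show ?thesis using r kj 2 unfolding Q_def p_def coeff_diff coeff_add coeff_smult coeff_monom_mult coeff_pderiv coeff_vp
        by (simp add: k1 algebra_simps)
    next
      case 3
      have k1: "real (k - Suc (Suc i)) = real k - real i - 2" using True 3 by (simp add: of_nat_diff)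
      show ?thesis using r kj 3 unfolding Q_def p_def coeff_diff coeff_add coeff_smult coeff_monom_mult coeff_pderiv coeff_vp
        by (simp add: k1 algebra_simps)
    qed
  qed
  then have "Q = 0" by (simp add: poly_eq_iff)
  then have "poly Q x = 0" by simp
  then show ?thesis unfolding Q_def p_def
    by (simp add: poly_monom algebra_simps power2_eq_square)
qed


definition ee :: "real \<Rightarrow> real \<Rightarrow> real" where
  "ee c x = exp ((1-c)*ln(1+x) + (1+c)*ln(1-x))"
definition rr :: "real \<Rightarrow> real \<Rightarrow> real" where
  "rr c x = (1-c)/(1+x) - (1+c)/(1-x)"
definition rd :: "real \<Rightarrow> real \<Rightarrow> real" where
  "rd c x = -(1-c)/(1+x)\<^sup>2 - (1+c)/(1-x)\<^sup>2"

definition V0 :: "real \<Rightarrow> nat \<Rightarrow> real \<Rightarrow> real" where "V0 c k x = poly (vp c k) x"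
definition V1 :: "real \<Rightarrow> nat \<Rightarrow> real \<Rightarrow> real" where "V1 c k x = poly (pderiv (vp c k)) x"
definition V2 :: "real \<Rightarrow> nat \<Rightarrow> real \<Rightarrow> real" where "V2 c k x = poly (pderiv (pderiv (vp c k))) x"

definition W0 :: "real \<Rightarrow> nat \<Rightarrow> real \<Rightarrow> real" where "W0 c k x = ee c x * V0 c k x"
definition W1 :: "real \<Rightarrow> nat \<Rightarrow> real \<Rightarrow> real" where
  "W1 c k x = ee c x * (rr c x * V0 c k x + V1 c k x)"
definition W2 :: "real \<Rightarrow> nat \<Rightarrow> real \<Rightarrow> real" where
  "W2 c k x = ee c x * (rr c x * (rr c x * V0 c k x + V1 c k x) + (rd c x * V0 c k x + rr c x * V1 c k x + V2 c k x))"

lemma ee_deriv: assumes x: "x \<in> {-1<..<1}"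
  shows "(ee c has_real_derivative ee c x * rr c x) (at x)"
proof -
  have "(ee c has_real_derivative ee c x * ((1-c)*(1/(1+x)) + (1+c)*(-1/(1-x)))) (at x)"
    unfolding ee_def using x by (auto intro!: derivative_eq_intros)
  moreover have "(1-c)*(1/(1+x)) + (1+c)*(-1/(1-x)) = rr c x" unfolding rr_def by simp
  ultimately show ?thesis by simp
qed

lemma rr_deriv: assumes x: "x \<in> {-1<..<1}"
  shows "(rr c has_real_derivative rd c x) (at x)"
proof -
  have x1: "1 + x \<noteq> 0" "1 - x \<noteq> 0" using x by auto
  have "(rr c has_real_derivative (- ((1-c) * 1) / (1+x)\<^sup>2 - (- ((1+c) * (-1)) / (1-x)\<^sup>2))) (at x)"
    unfolding rr_def using x1 by (auto intro!: derivative_eq_intros simp: power2_eq_square)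
  moreover have "(- ((1-c) * 1) / (1+x)\<^sup>2 - (- ((1+c) * (-1)) / (1-x)\<^sup>2)) = rd c x"
    unfolding rd_def by simp
  ultimately show ?thesis by simp
qed

lemma W0_deriv: assumes x: "x \<in> {-1<..<1}"
  shows "(W0 c k has_real_derivative W1 c k x) (at x)"
proof -
  have "(W0 c k has_real_derivative ee c x * rr c x * V0 c k x + ee c x * V1 c k x) (at x)"
    unfolding W0_def[abs_def] V0_def V1_def
    by (auto intro!: derivative_eq_intros ee_deriv[OF x] simp: algebra_simps)
  then show ?thesis unfolding W1_def by (simp add: algebra_simps)
qed

lemma W1_deriv: assumes x: "x \<in> {-1<..<1}"
  shows "(W1 c k has_real_derivative W2 c k x) (at x)"
proof -
  have "(W1 c k has_real_derivative ee c x * rr c x * (rr c x * V0 c k x + V1 c k x)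
      + ee c x * ((rd c x * V0 c k x + rr c x * V1 c k x) + V2 c k x)) (at x)"
    unfolding W1_def[abs_def] V0_def V1_def V2_def
    by (auto intro!: derivative_eq_intros ee_deriv[OF x] rr_deriv[OF x] simp: algebra_simps)
  then show ?thesis unfolding W2_def by (simp add: algebra_simps)
qed

lemma W_ode: assumes x: "x \<in> {-1<..<1}"
  shows "(1-x\<^sup>2) * W2 c k x + 2*c * W1 c k x = - real ((k+1)*(k+2)) * W0 c k x"
proof -
  have x1: "1 + x \<noteq> 0" "1 - x \<noteq> 0" using x by auto
  define A where "A = 1/(1+x)"
  define B where "B = 1/(1-x)"
  have hA: "(1+x) * A = 1" and hB: "(1-x) * B = 1" using x1 by (auto simp: A_def B_def)
  have rrAB: "rr c x = (1-c)*A - (1+c)*B" unfolding rr_def A_def B_def by simp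
  have rdAB: "rd c x = -(1-c)*A*A - (1+c)*B*B" unfolding rd_def A_def B_def by (simp add: power2_eq_square)
  have a: "(1-x\<^sup>2) * rr c x = -2*c - 2*x"
    unfolding rrAB using hA hB by algebra
  have b: "(1-x\<^sup>2) * (rr c x * rr c x + rd c x) + 2*c*rr c x = -2"
    unfolding rrAB rdAB using hA hB by algebra
  have v: "(1 - x\<^sup>2) * V2 c k x = (2*c + 4*x) * V1 c k x - real (k*(k+3)) * V0 c k x"
    using vp_ode[of x c k] unfolding V0_def V1_def V2_def by (simp add: algebra_simps)
  have "(1-x\<^sup>2) * W2 c k x + 2*c * W1 c k x
      = ee c x * (V0 c k x * ((1-x\<^sup>2) * (rr c x * rr c x + rd c x) + 2*c*rr c x)
          + V1 c k x * (2 * ((1-x\<^sup>2) * rr c x) + 2*c) + (1 - x\<^sup>2) * V2 c k x)"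
    unfolding W1_def W2_def by (simp add: algebra_simps)
  also have "\<dots> = ee c x * (V0 c k x * (-2) + V1 c k x * (2 * (-2*c - 2*x) + 2*c)
          + ((2*c + 4*x) * V1 c k x - real (k*(k+3)) * V0 c k x))"
    unfolding a b v ..
  also have "\<dots> = - real ((k+1)*(k+2)) * W0 c k x"
    unfolding W0_def by (simp add: algebra_simps)
  finally show ?thesis .
qed

lemma E_lim': assumes "e > 0"
  shows "((\<lambda>y::real. exp (e * ln (1-y))) \<longlongrightarrow> 0) (at_left 1)"
proof -
  have "((\<lambda>y::real. (1-y) powr e) \<longlongrightarrow> 0) (at_left 1)"
  proof (rule tendsto_zero_powrI)
    show "((\<lambda>y::real. 1-y) \<longlongrightarrow> 0) (at_left 1)"
      by (rule tendsto_eq_intros) (auto intro!: tendsto_intros)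
    show "\<forall>\<^sub>F x in at_left 1. 0 \<le> 1 - (x::real)"
      unfolding eventually_at_left_field by (rule exI[of _ 0]) auto
  qed (use assms in auto)
  then show ?thesis
    apply (rule Lim_transform_eventually)
    unfolding eventually_at_left_field by (rule exI[of _ 0]) (auto simp: powr_def)
qed

lemma W0_lim:
  assumes c: "0 \<le> c" "c < 1"
  shows "(W0 c k \<longlongrightarrow> 0) (at_right (-1))" "(W0 c k \<longlongrightarrow> 0) (at_left 1)"
proof -
  have eq: "W0 c k x = exp ((1-c)*ln(1+x)) * exp ((1+c)*ln(1-x)) * poly (vp c k) x" for x
    unfolding W0_def ee_def V0_def by (simp add: exp_add)
  have pc: "((\<lambda>x. poly (vp c k) x) \<longlongrightarrow> poly (vp c k) a) (at a within S)" for a S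
    by (intro isCont_within) simp
  have "((\<lambda>x. exp ((1-c)*ln(1+x)) * exp ((1+c)*ln(1-x)) * poly (vp c k) x) \<longlongrightarrow>
          0 * exp ((1+c)*ln(1-(-1))) * poly (vp c k) (-1)) (at_right (-1))"
    by (intro tendsto_intros E_lim pc) (use c in auto)
  then show "(W0 c k \<longlongrightarrow> 0) (at_right (-1))" unfolding eq[abs_def] by simp
  have "((\<lambda>x. exp ((1-c)*ln(1+x)) * exp ((1+c)*ln(1-x)) * poly (vp c k) x) \<longlongrightarrow>
          exp ((1-c)*ln(1+1)) * 0 * poly (vp c k) 1) (at_left 1)"
    by (intro tendsto_intros E_lim' pc) (use c in auto)
  then show "(W0 c k \<longlongrightarrow> 0) (at_left 1)" unfolding eq[abs_def] by simp
qed


lemma majorant_integrable: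
  assumes c: "0 \<le> c" "c < 1"
  shows "(\<lambda>x. C * (1+x) powr (1-2*c)) integrable_on {-1<..<1::real}"
proof -
  define F where "F x = C * (1+x) powr (2-2*c) / (2-2*c)" for x :: real
  have "((\<lambda>x. C * (1+x) powr (1-2*c)) has_integral (F 1 - F (-1))) {-1..1}"
  proof (rule fundamental_theorem_of_calculus_interior)
    show "continuous_on {-1..1} F" unfolding F_def
      by (intro continuous_intros continuous_on_powr') (use c in auto)
    fix x :: real assume x: "x \<in> {-1<..<1}"
    have "(F has_real_derivative C * ((2-2*c) * (1+x) powr (2-2*c-1) * 1) / (2-2*c)) (at x)"
      unfolding F_def using x by (auto intro!: derivative_eq_intros)
    moreover have "C * ((2-2*c) * (1+x) powr (2-2*c-1) * 1) / (2-2*c) = C * (1+x) powr (1-2*c)"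
      using c by (simp add: field_simps)
    ultimately show "(F has_vector_derivative C * (1+x) powr (1-2*c)) (at x)"
      by (simp add: has_real_derivative_iff_has_vector_derivative)
  qed simp
  then have "(\<lambda>x. C * (1+x) powr (1-2*c)) integrable_on {-1..1::real}" by blast
  then show ?thesis using integrable_on_open_interval_real by blast
qed

lemma cancel_w:
  assumes "x \<in> {-1<..<1::real}"
  shows "complex_of_real (1 - x\<^sup>2) * complex_of_real (y / (1 - x\<^sup>2)) = complex_of_real y"
proof -
  have "x\<^sup>2 < 1" using assms by (auto simp: abs_square_less_1)
  then have "(1 - x\<^sup>2) * (y/(1-x\<^sup>2)) = y" by simp
  then show ?thesis by (metis of_real_mult)
qed

definition dP0 :: "real \<Rightarrow> nat \<Rightarrow> real \<Rightarrow> complex" where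
  "dP0 c k t = complex_of_real (W0 c k t / (1-t\<^sup>2))"

lemma W0_cont: "x \<in> {-1<..<1} \<Longrightarrow> isCont (W0 c k) x"
  using W0_deriv DERIV_isCont by blast

lemma inX_dP0:
  assumes c: "0 \<le> c" "c < 1"
  shows "in_X (dP0 c k)"
  unfolding in_X_def
proof (intro conjI)
  obtain MV where MV: "\<And>x. x \<in> {-1..1} \<Longrightarrow> \<bar>poly (vp c k) x\<bar> \<le> MV"
  proof -
    have "compact ((\<lambda>x. poly (vp c k) x) ` {-1..1::real})"
      by (intro compact_continuous_image continuous_intros) simp
    then show ?thesis using that compact_imp_bounded bounded_iff
      by (metis image_eqI real_norm_def)
  qed
  define C where "C = exp ((1+2*c) * ln 2) * MV\<^sup>2"
  let ?f = "\<lambda>x. (1 - x\<^sup>2) * (cmod (dP0 c k x))\<^sup>2"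
  show "?f integrable_on {-1<..<1}"
  proof (rule measurable_bounded_by_integrable_imp_integrable)
    show "(\<lambda>x. C * (1+x) powr (1-2*c)) integrable_on {-1<..<1}" by (rule majorant_integrable[OF c])
    show "{-1<..<1::real} \<in> sets lebesgue" by simp
    have "continuous_on {-1<..<1} ?f"
    proof -
      have "continuous_on {-1<..<1} (W0 c k)" using W0_cont continuous_at_imp_continuous_on by blast
      then show ?thesis unfolding dP0_def
        by (intro continuous_intros) (auto simp: power2_eq_square square_eq_1_iff)
    qed
    then show "?f \<in> borel_measurable (lebesgue_on {-1<..<1})"
      by (rule continuous_imp_measurable_on_sets_lebesgue) simp
    fix x :: real assume x: "x \<in> {-1<..<1}"
    have x1: "1 + x > 0" "1 - x > 0" using x by auto
    have f1: "1 - x\<^sup>2 = (1+x)*(1-x)" by (simp add: power2_eq_square algebra_simps)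
    have gen: "d \<noteq> 0 \<Longrightarrow> d * (W/d)\<^sup>2 = W\<^sup>2/d" for d W :: real
      by (simp add: field_simps power2_eq_square)
    have "(1+x)*(1-x) \<noteq> 0" using x1 by simp
    then have "?f x = W0 c k x ^ 2 / ((1+x)*(1-x))"
      unfolding dP0_def norm_of_real power2_abs f1 by (rule gen)
    also have "\<dots> = exp ((1-2*c) * ln (1+x)) * exp ((1+2*c) * ln (1-x)) * (poly (vp c k) x)\<^sup>2"
    proof -
      have F1: "(1+x)*(1-x) = exp (ln (1+x) + ln (1-x))" using x1 by (simp add: exp_add)
      have F2: "W0 c k x ^ 2 = exp (2*((1-c)*ln(1+x) + (1+c)*ln(1-x))) * (poly (vp c k) x)\<^sup>2"
      proof -
        have "(ee c x)\<^sup>2 = exp (2*((1-c)*ln(1+x) + (1+c)*ln(1-x)))"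
          unfolding ee_def mult_2 exp_add power2_eq_square ..
        then show ?thesis unfolding W0_def V0_def by (simp add: power_mult_distrib)
      qed
      have s1: "W0 c k x ^ 2 / ((1+x)*(1-x))
          = exp (2*((1-c)*ln(1+x) + (1+c)*ln(1-x))) / exp (ln (1+x) + ln (1-x)) * (poly (vp c k) x)\<^sup>2"
        unfolding F1 F2 by (simp only: times_divide_eq_left)
      have ex: "2*((1-c)*ln(1+x) + (1+c)*ln(1-x)) - (ln (1+x) + ln (1-x)) = (1-2*c) * ln (1+x) + (1+2*c) * ln (1-x)"
        by (simp add: algebra_simps)
      have s2: "exp (2*((1-c)*ln(1+x) + (1+c)*ln(1-x))) / exp (ln (1+x) + ln (1-x))
          = exp ((1-2*c) * ln (1+x)) * exp ((1+2*c) * ln (1-x))"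
        by (subst exp_diff[symmetric], subst ex, rule exp_add)
      show ?thesis unfolding s1 s2 ..
    qed
    also have "\<dots> \<le> (1+x) powr (1-2*c) * C"
    proof -
      have e1: "exp ((1-2*c) * ln (1+x)) = (1+x) powr (1-2*c)" using x1 by (simp add: powr_def)
      have e2: "exp ((1+2*c) * ln (1-x)) \<le> exp ((1+2*c) * ln 2)" using x1 c x
        by (auto intro!: mult_left_mono)
      have h1: "\<bar>poly (vp c k) x\<bar> \<le> \<bar>MV\<bar>" using MV[of x] x by auto
      have e3: "(poly (vp c k) x)\<^sup>2 \<le> MV\<^sup>2" using h1 by (simp only: abs_le_square_iff)
      have "exp ((1+2*c) * ln (1-x)) * (poly (vp c k) x)\<^sup>2 \<le> C"
        unfolding C_def by (intro mult_mono e2 e3) auto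
      then show ?thesis unfolding e1 by (simp add: mult.assoc mult_left_mono)
    qed
    finally have le: "?f x \<le> (1+x) powr (1-2*c) * C" .
    have "x\<^sup>2 < 1" using x by (auto simp: abs_square_less_1)
    then have nn: "?f x \<ge> 0" by simp
    show "norm (?f x) \<le> C * (1+x) powr (1-2*c)" using le nn by (simp add: mult.commute)
  qed
  have ev1: "\<forall>\<^sub>F x in at_right (-1). complex_of_real (W0 c k x) = complex_of_real (1 - x\<^sup>2) * dP0 c k x"
    unfolding eventually_at_right_field
  proof (rule exI[of _ 1], intro conjI allI impI)
    fix y :: real assume "-1 < y" "y < 1"
    then show "complex_of_real (W0 c k y) = complex_of_real (1 - y\<^sup>2) * dP0 c k y"
      unfolding dP0_def by (intro cancel_w[symmetric]) auto
  qed simp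
  have ev2: "\<forall>\<^sub>F x in at_left 1. complex_of_real (W0 c k x) = complex_of_real (1 - x\<^sup>2) * dP0 c k x"
    unfolding eventually_at_left_field
  proof (rule exI[of _ "-1"], intro conjI allI impI)
    fix y :: real assume "-1 < y" "y < 1"
    then show "complex_of_real (W0 c k y) = complex_of_real (1 - y\<^sup>2) * dP0 c k y"
      unfolding dP0_def by (intro cancel_w[symmetric]) auto
  qed simp
  show "((\<lambda>x. complex_of_real (1 - x\<^sup>2) * dP0 c k x) \<longlongrightarrow> 0) (at_right (- 1))"
    using Lim_transform_eventually[OF tendsto_of_real[OF W0_lim(1)[OF c]] ev1] by simp
  show "((\<lambda>x. complex_of_real (1 - x\<^sup>2) * dP0 c k x) \<longlongrightarrow> 0) (at_left 1)"
    using Lim_transform_eventually[OF tendsto_of_real[OF W0_lim(2)[OF c]] ev2] by simp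
qed


lemma dP0_cont: assumes x: "x \<in> {-1<..<1}" shows "isCont (dP0 c k) x"
proof -
  have "x\<^sup>2 < 1" using x by (auto simp: abs_square_less_1)
  then have "1 - x\<^sup>2 \<noteq> 0" by simp
  then show ?thesis unfolding dP0_def[abs_def]
    by (intro continuous_intros W0_cont[OF x]) auto
qed

lemma existence:
  assumes c: "0 \<le> c" "c < 1"
  shows "\<exists>Psi0. solves (2*c) (- of_nat ((k+1)*(k+2))) Psi0 \<and> nonconstant Psi0"
proof -
  have ex: "\<exists>F. \<forall>x::real. -1 < ereal x \<longrightarrow> ereal x < 1 \<longrightarrow> (F has_vector_derivative dP0 c k x) (at x)"
  proof (rule einterval_antiderivative)
    show "(-1::ereal) < 1" by (simp add: one_ereal_def)
    fix x :: real assume "-1 < ereal x" "ereal x < 1"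
    then have "x \<in> {-1<..<1}" by (simp add: one_ereal_def)
    then show "isCont (dP0 c k) x" by (rule dP0_cont)
  qed
  then obtain Psi0 where dPsi: "\<forall>x::real. -1 < ereal x \<longrightarrow> ereal x < 1 \<longrightarrow> (Psi0 has_vector_derivative dP0 c k x) (at x)"
    by blast
  have dPsi': "(Psi0 has_vector_derivative dP0 c k x) (at x)" if "x \<in> {-1<..<1}" for x
  proof -
    have "-1 < ereal x" "ereal x < 1" using that by (auto simp: one_ereal_def)
    then show ?thesis using dPsi by blast
  qed
  have sol: "solves (2*c) (- of_nat ((k+1)*(k+2))) Psi0"
    unfolding solves_def
  proof (intro exI conjI ballI)
    show "in_X (dP0 c k)" by (rule inX_dP0[OF c])
    fix x :: real assume x: "x \<in> {-1<..<1}"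
    show "(Psi0 has_vector_derivative dP0 c k x) (at x)" by (rule dPsi'[OF x])
    show "((\<lambda>t. complex_of_real (1 - t\<^sup>2) * dP0 c k t) has_vector_derivative complex_of_real (W1 c k x)) (at x)"
    proof (rule has_vector_derivative_transform_within_open)
      show "((\<lambda>t. complex_of_real (W0 c k t)) has_vector_derivative complex_of_real (W1 c k x)) (at x)"
        by (rule has_vector_derivative_of_real[OF W0_deriv[OF x]])
      show "open {-1<..<1::real}" by simp
      show "x \<in> {-1<..<1}" by (rule x)
      fix y :: real assume "y \<in> {-1<..<1}"
      then show "complex_of_real (W0 c k y) = complex_of_real (1 - y\<^sup>2) * dP0 c k y"
        unfolding dP0_def by (intro cancel_w[symmetric])
    qed
    show "((\<lambda>t. complex_of_real (W1 c k t)) has_vector_derivative complex_of_real (W2 c k x)) (at x)"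
      by (rule has_vector_derivative_of_real[OF W1_deriv[OF x]])
    have "x\<^sup>2 < 1" using x by (auto simp: abs_square_less_1)
    then have nz: "1 - x\<^sup>2 \<noteq> 0" by simp
    have R: "W2 c k x + (2*c/(1-x\<^sup>2)) * W1 c k x = - real ((k+1)*(k+2)) * (W0 c k x/(1-x\<^sup>2))"
    proof -
      have "(1-x\<^sup>2) * (W2 c k x + (2*c/(1-x\<^sup>2)) * W1 c k x) = (1-x\<^sup>2) * W2 c k x + 2*c * W1 c k x"
      proof -
        have gen: "d \<noteq> 0 \<Longrightarrow> d * (a + (b/d) * e) = d * a + b * e" for a b d e :: real
          by (simp add: field_simps)
        show ?thesis using gen[OF nz] .
      qed
      also have "\<dots> = - real ((k+1)*(k+2)) * W0 c k x" by (rule W_ode[OF x])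
      also have "\<dots> = (1-x\<^sup>2) * (- real ((k+1)*(k+2)) * (W0 c k x/(1-x\<^sup>2)))" using nz by simp
      finally show ?thesis using mult_left_cancel[OF nz] by blast
    qed
    have "complex_of_real (W2 c k x + (2*c/(1-x\<^sup>2)) * W1 c k x)
        = complex_of_real (- real ((k+1)*(k+2)) * (W0 c k x/(1-x\<^sup>2)))" using R by simp
    then show "complex_of_real (W2 c k x) + complex_of_real (2 * c / (1 - x\<^sup>2)) * complex_of_real (W1 c k x) =
        - of_nat ((k+1)*(k+2)) * dP0 c k x"
      unfolding dP0_def by (simp only: of_real_add of_real_mult of_real_minus of_real_of_nat_eq)
  qed
  have nc: "nonconstant Psi0"
  proof -
    have "infinite {-1<..<1::real}" by simp
    moreover have "finite {x. poly (vp c k) x = 0}" by (rule poly_roots_finite[OF vp_nz])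
    ultimately have "\<not> {-1<..<1::real} \<subseteq> {x. poly (vp c k) x = 0}" using finite_subset by blast
    then obtain x0 where x0: "x0 \<in> {-1<..<1}" "poly (vp c k) x0 \<noteq> 0" by blast
    have "x0\<^sup>2 < 1" using x0 by (auto simp: abs_square_less_1)
    then have nz: "1 - x0\<^sup>2 \<noteq> 0" by simp
    have "ee c x0 > 0" unfolding ee_def by simp
    then have "W0 c k x0 \<noteq> 0" using x0 unfolding W0_def V0_def by simp
    then have dnz: "dP0 c k x0 \<noteq> 0" unfolding dP0_def of_real_eq_0_iff using nz by simp
    show ?thesis
    proof (unfold nonconstant_def, rule notI)
      assume "\<exists>cst. \<forall>x\<in>{-1<..<1::real}. Psi0 x = cst"
      then obtain cst where cst: "\<forall>x\<in>{-1<..<1::real}. Psi0 x = cst" by blast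
      have "(Psi0 has_vector_derivative 0) (at x0)"
      proof (rule has_vector_derivative_transform_within_open[of "\<lambda>_. cst" _ _ "{-1<..<1}"])
        show "((\<lambda>_. cst) has_vector_derivative 0) (at x0)" by (rule has_vector_derivative_const)
      qed (use x0 cst in auto)
      then have "dP0 c k x0 = 0" using vector_derivative_unique_at[OF dPsi'[OF x0(1)]] by blast
      then show False using dnz by simp
    qed
  qed
  show ?thesis using sol nc by blast
qed


lemma prod_inj: "(j+1)*(j+2) = (k+1)*((k::nat)+2) \<Longrightarrow> j = k"
proof (rule ccontr)
  assume h: "(j+1)*(j+2) = (k+1)*(k+2)" and ne: "j \<noteq> k"
  then consider "j < k" | "k < j" by linarith
  then show False
  proof cases
    case 1 then have "(j+1)*(j+2) < (k+1)*(k+2)" by (intro mult_strict_mono) auto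
    then show False using h by simp
  next
    case 2 then have "(k+1)*(k+2) < (j+1)*(j+2)" by (intro mult_strict_mono) auto
    then show False using h by simp
  qed
qed

lemma mu_eq_inj:
  assumes "(- of_nat ((k+1)*(k+2)) :: complex) + of_nat ((j+1)*(j+2)) = 0"
  shows "j = k"
proof -
  have "(of_nat ((j+1)*(j+2)) :: complex) = of_nat ((k+1)*(k+2))" using assms by (simp add: algebra_simps)
  then have "(j+1)*(j+2) = (k+1)*(k+2)" by (simp only: of_nat_eq_iff)
  then show ?thesis by (rule prod_inj)
qed

lemma mom_lin:
  assumes s: "sol c \<mu> w w1 w2" and v: "sol c \<mu> v v1 v2"
  shows "mom (ext0 (\<lambda>x. w x - a * v x)) j = mom (ext0 w) j - a * mom (ext0 v) j"
proof -
  have e: "ext0 (\<lambda>x. w x - a * v x) = (\<lambda>x. ext0 w x - a * ext0 v x)"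
    by (auto simp: ext0_def)
  have i1: "(\<lambda>x. ext0 w x * of_real (x^j)) integrable_on {-1..1}"
    by (rule integrable_continuous_interval) (intro continuous_intros ext0_cont[OF s])
  have i2: "(\<lambda>x. a * (ext0 v x * of_real (x^j))) integrable_on {-1..1}"
    by (rule integrable_continuous_interval) (intro continuous_intros ext0_cont[OF v])
  have "mom (ext0 (\<lambda>x. w x - a * v x)) j = integral {-1..1} (\<lambda>x. ext0 w x * of_real (x^j) - a * (ext0 v x * of_real (x^j)))"
    unfolding mom_def e by (simp add: algebra_simps)
  also have "\<dots> = mom (ext0 w) j - a * mom (ext0 v) j"
    unfolding mom_def integral_diff[OF i1 i2] Henstock_Kurzweil_Integration.integral_mult_right ..
  finally show ?thesis .
qed

lemma eig_form:
  assumes e: "0 \<le> \<epsilon>" "\<epsilon> < 2" and s: "solves \<epsilon> \<mu> Psi" and nc: "nonconstant Psi"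
  shows "\<exists>j. \<mu> + of_nat ((j+1)*(j+2)) = 0"
proof (rule ccontr)
  assume h: "\<not> ?thesis"
  obtain dPsi Phi dPhi where so: "sol (\<epsilon>/2) \<mu> (\<lambda>t. of_real (1-t\<^sup>2) * dPsi t) Phi dPhi"
    and d: "\<And>x. x \<in> {-1<..<1} \<Longrightarrow> (Psi has_vector_derivative dPsi x) (at x)"
    using solves_sol[OF s] by blast
  have "\<forall>x\<in>{-1<..<1}. of_real (1-x\<^sup>2) * dPsi x = 0"
    using main_zero[OF so] e h by auto
  then show False using w_zero_const[OF d] nc by blast
qed

theorem proposition8:
  fixes \<epsilon> :: real
  assumes "\<epsilon> \<ge> 0"
  shows "(\<epsilon> < 2 \<longrightarrow>
            {\<mu>. eigenvalue \<epsilon> \<mu>} = {- of_nat (n * (n + 1)) | n::nat. True} \<and>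
            (\<forall>n::nat. n \<ge> 1 \<longrightarrow>
               (\<exists>Psi0. solves \<epsilon> (- of_nat (n * (n + 1))) Psi0 \<and> nonconstant Psi0 \<and>
                  (\<forall>Psi. solves \<epsilon> (- of_nat (n * (n + 1))) Psi \<longrightarrow>
                     (\<exists>a c. \<forall>x\<in>{-1<..<1::real}. Psi x = a * Psi0 x + c)))) \<and>
            (\<forall>Psi. solves \<epsilon> 0 Psi \<longrightarrow> \<not> nonconstant Psi))
       \<and> (\<epsilon> \<ge> 2 \<longrightarrow> (\<forall>\<mu>. eigenvalue \<epsilon> \<mu> \<longrightarrow> \<mu> = 0))"
proof (intro conjI impI)
  assume e2: "\<epsilon> < 2"
  have c: "0 \<le> \<epsilon>/2" "\<epsilon>/2 < 1" using assms e2 by auto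
  have ee: "2 * (\<epsilon>/2) = \<epsilon>" by simp
  have exist: "\<exists>Psi0. solves \<epsilon> (- of_nat (n * (n + 1))) Psi0 \<and> nonconstant Psi0" if n: "n \<ge> 1" for n
  proof -
    obtain k where k: "n = k + 1" using n by (metis add.commute le_Suc_ex)
    have "(k+1)*(k+2) = n*(n+1)" using k by simp
    then show ?thesis using existence[OF c, of k] unfolding ee by simp
  qed
  show "{\<mu>. eigenvalue \<epsilon> \<mu>} = {- of_nat (n * (n + 1)) | n::nat. True}"
  proof (intro equalityI subsetI)
    fix \<mu> :: complex assume "\<mu> \<in> {\<mu>. eigenvalue \<epsilon> \<mu>}"
    then have "\<mu> = 0 \<or> (\<exists>Psi. solves \<epsilon> \<mu> Psi \<and> nonconstant Psi)" by (simp add: eigenvalue_def)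
    then show "\<mu> \<in> {- of_nat (n * (n + 1)) | n::nat. True}"
    proof
      assume "\<mu> = 0" then show ?thesis by (intro CollectI exI[of _ 0]) simp
    next
      assume "\<exists>Psi. solves \<epsilon> \<mu> Psi \<and> nonconstant Psi"
      then obtain j where "\<mu> + of_nat ((j+1)*(j+2)) = 0" using eig_form assms e2 by blast
      then have "\<mu> = - of_nat ((j+1) * ((j+1)+1))" by (simp add: algebra_simps eq_neg_iff_add_eq_0)
      then show ?thesis by blast
    qed
  next
    fix \<mu> :: complex assume "\<mu> \<in> {- of_nat (n * (n + 1)) | n::nat. True}"
    then obtain n where n: "\<mu> = - of_nat (n * (n + 1))" by blast
    show "\<mu> \<in> {\<mu>. eigenvalue \<epsilon> \<mu>}"
    proof (cases "n = 0")
      case True then show ?thesis using n by (simp add: eigenvalue_def)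
    next
      case False then show ?thesis using n exist[of n] by (auto simp: eigenvalue_def)
    qed
  qed
  show "\<forall>n::nat. n \<ge> 1 \<longrightarrow>
        (\<exists>Psi0. solves \<epsilon> (- of_nat (n * (n + 1))) Psi0 \<and> nonconstant Psi0 \<and>
           (\<forall>Psi. solves \<epsilon> (- of_nat (n * (n + 1))) Psi \<longrightarrow>
              (\<exists>a c. \<forall>x\<in>{-1<..<1::real}. Psi x = a * Psi0 x + c)))"
  proof (intro allI impI)
    fix n :: nat assume n: "n \<ge> 1"
    obtain k where k: "n = k + 1" using n by (metis add.commute le_Suc_ex)
    define \<mu> :: complex where "\<mu> = - of_nat (n * (n + 1))"
    have muk: "\<mu> = - of_nat ((k+1)*(k+2))" unfolding \<mu>_def k by (simp add: algebra_simps)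
    obtain Psi0 where s0: "solves \<epsilon> \<mu> Psi0" and nc0: "nonconstant Psi0"
      using exist[OF n] unfolding \<mu>_def by blast
    obtain dPsi0 Phi0 dPhi0 where so0: "sol (\<epsilon>/2) \<mu> (\<lambda>t. of_real (1-t\<^sup>2) * dPsi0 t) Phi0 dPhi0"
      and d0: "\<And>x. x \<in> {-1<..<1} \<Longrightarrow> (Psi0 has_vector_derivative dPsi0 x) (at x)"
      using solves_sol[OF s0] by blast
    define w0 where "w0 t = of_real (1-t\<^sup>2) * dPsi0 t" for t
    have hj: "\<mu> + of_nat ((j+1)*(j+2)) = 0 \<Longrightarrow> j = k" for j
      using mu_eq_inj[of k j] unfolding muk by simp
    have m0: "mom (ext0 w0) k \<noteq> 0"
    proof
      assume z: "mom (ext0 w0) k = 0"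
      have "\<forall>x\<in>{-1<..<1}. w0 x = 0"
        using main_zero[OF so0[folded w0_def] c] z hj by blast
      then show False using w_zero_const[OF d0] nc0 unfolding w0_def by blast
    qed
    have "\<forall>Psi. solves \<epsilon> \<mu> Psi \<longrightarrow> (\<exists>a c. \<forall>x\<in>{-1<..<1::real}. Psi x = a * Psi0 x + c)"
    proof (intro allI impI)
      fix Psi assume s: "solves \<epsilon> \<mu> Psi"
      obtain dPsi Phi dPhi where so: "sol (\<epsilon>/2) \<mu> (\<lambda>t. of_real (1-t\<^sup>2) * dPsi t) Phi dPhi"
        and d: "\<And>x. x \<in> {-1<..<1} \<Longrightarrow> (Psi has_vector_derivative dPsi x) (at x)"
        using solves_sol[OF s] by blast
      define w where "w t = of_real (1-t\<^sup>2) * dPsi t" for t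
      define a where "a = mom (ext0 w) k / mom (ext0 w0) k"
      note sv = sol_lin[OF so[folded w_def] so0[folded w0_def], of a]
      have "mom (ext0 (\<lambda>x. w x - a * w0 x)) k = 0"
        unfolding mom_lin[OF so[folded w_def] so0[folded w0_def]] a_def using m0 by simp
      then have "\<forall>x\<in>{-1<..<1}. w x - a * w0 x = 0"
        using main_zero[OF sv c] hj by blast
      then have "\<forall>x\<in>{-1<..<1}. of_real (1-x\<^sup>2) * dPsi x - a * (of_real (1-x\<^sup>2) * dPsi0 x) = 0"
        unfolding w_def w0_def .
      then have "\<exists>cc. \<forall>x\<in>{-1<..<1}. Psi x = a * Psi0 x + cc"
        using w_prop_const[OF d d0, of a] by blast
      then show "\<exists>a c. \<forall>x\<in>{-1<..<1::real}. Psi x = a * Psi0 x + c" by blast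
    qed
    then show "\<exists>Psi0. solves \<epsilon> (- of_nat (n * (n + 1))) Psi0 \<and> nonconstant Psi0 \<and>
           (\<forall>Psi. solves \<epsilon> (- of_nat (n * (n + 1))) Psi \<longrightarrow>
              (\<exists>a c. \<forall>x\<in>{-1<..<1::real}. Psi x = a * Psi0 x + c))"
      using s0 nc0 unfolding \<mu>_def by blast
  qed
  show "\<forall>Psi. solves \<epsilon> 0 Psi \<longrightarrow> \<not> nonconstant Psi"
  proof (intro allI impI notI)
    fix Psi assume s: "solves \<epsilon> 0 Psi" and nc: "nonconstant Psi"
    obtain j where "(0::complex) + of_nat ((j+1)*(j+2)) = 0" using eig_form[OF assms e2 s nc] by blast
    then show False by (simp only: add_0_left of_nat_eq_0_iff) simp
  qed
next
  assume e2: "\<epsilon> \<ge> 2"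
  show "\<forall>\<mu>. eigenvalue \<epsilon> \<mu> \<longrightarrow> \<mu> = 0"
  proof (intro allI impI, rule ccontr)
    fix \<mu> assume ev: "eigenvalue \<epsilon> \<mu>" and ne: "\<mu> \<noteq> 0"
    then obtain Psi where s: "solves \<epsilon> \<mu> Psi" and nc: "nonconstant Psi" unfolding eigenvalue_def by blast
    obtain dPsi Phi dPhi where so: "sol (\<epsilon>/2) \<mu> (\<lambda>t. of_real (1-t\<^sup>2) * dPsi t) Phi dPhi"
      and d: "\<And>x. x \<in> {-1<..<1} \<Longrightarrow> (Psi has_vector_derivative dPsi x) (at x)"
      using solves_sol[OF s] by blast
    have "\<forall>x\<in>{-1<..<1}. of_real (1-x\<^sup>2) * dPsi x = 0"
      using big_c_zero[OF so] e2 by auto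
    then show False using w_zero_const[OF d] nc by blast
  qed
qed


end
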